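(* For a comical set $X$, the homotopy $1$-category $\mathrm{ho}_1X$ — whose objects are the $0$-cubes of $X$, whose morphisms from $x$ to $y$ are the homotopy classes of $1$-cubes from $x$ to $y$, whose composition sends $([f],[g])$ to the class of any composite of $f$ and $g$, and whose identity at $x$ is $[x\sigma_1]$ — is a well-defined category (composition is well defined, unital and associative).
   Context: Cubical sets are presheaves on the box category $\square$ (objects $[1]^n=\{0<1\}^n$; morphisms generated by faces $\partial_{i,\varepsilon}$ inserting $\varepsilon$ as $i$-th coordinate, degeneracies $\sigma_i$ deleting the $i$-th coordinate, and max/min connections $\gamma_{i,1},\gamma_{i,0}$); operators act on the right, so for a $0$-cube $x$, $x\sigma_1$ is the degenerate $1$-cube at $x$. A cube is degenerate if it is $x\sigma_i$ or $x\gamma_{i,\varepsilon}$; composites of faces have unique normal forms $\partial_{k_1,\varepsilon_1}\cdots\partial_{k_t,\varepsilon_t}$, $k_1>\dots>k_t$. A marked cubical set is a cubical set with marked cubes of positive dimension containing all degenerate cubes. $\tau_jX$ is $X$ with all cubes of dimension $\ge j+1$ marked. $\square^n_{k,\varepsilon}$ ($n\ge1$, $1\le k\le n$) is $\square^n$ in which a non-degenerate positive-dimensional face in normal form is marked iff none of its factors is $\partial_{k-1,\varepsilon},\partial_{k,0},\partial_{k,1},\partial_{k+1,\varepsilon}$; $\sqcap^n_{k,\varepsilon}$ is the union of codimension-one faces except $\partial_{k,\varepsilon}$, regularly marked; for $n\ge2$, $(\square^n_{k,\varepsilon})''=\tau_{n-2}\square^n_{k,\varepsilon}$ and $(\square^n_{k,\varepsilon})'$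 is $\square^n_{k,\varepsilon}$ with all $(n-1)$-faces other than $\partial_{k,\varepsilon}$ marked. A comical set is a marked cubical set with the right lifting property against all $\sqcap^n_{k,\varepsilon}\hookrightarrow\square^n_{k,\varepsilon}$ and $(\square^n_{k,\varepsilon})'\hookrightarrow(\square^n_{k,\varepsilon})''$. A $1$-cube $f$ goes from $x=f\partial_{1,0}$ to $y=f\partial_{1,1}$. Write a $2$-cube $s$ via its faces $(s\partial_{1,0},s\partial_{1,1},s\partial_{2,0},s\partial_{2,1})$. For $1$-cubes $f,g$ from $x$ to $y$, $f\sim g$ (homotopic) means there is a marked $2$-cube with faces $(g,y\sigma_1,f,y\sigma_1)$; in a comical set this is an equivalence relation, and $[f]$ denotes the class. Given $f$ from $x$ to $y$ and $g$ from $y$ to $z$, a composite of $f$ and $g$ is a $1$-cube $a$, $b$, $c$ or $d$ for which there exists a marked $2$-cube with faces $(a,g,f,z\sigma_1)$, $(f,b,x\sigma_1,g)$, $(f,z\sigma_1,c,g)$ or $(x\sigma_1,g,f,d)$ respectively; in a comical set such composites exist. *)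

theory Defs
  imports Main
begin

text \<open>Cubes of the standard cube are bit vectors, represented as bool lists of fixed
length (False = 0, True = 1).  A morphism [1]^m -> [1]^n is represented by a function on
bool lists, canonicalised to be [] outside lists of length m.\<close>

definition canon :: "nat \<Rightarrow> (bool list \<Rightarrow> bool list) \<Rightarrow> (bool list \<Rightarrow> bool list)" where
  "canon m f = (\<lambda>v. if length v = m then f v else [])"

text \<open>face map \<partial>_{i,e}: insert e as i-th coordinate (1-based)\<close>
definition face_fun :: "nat \<Rightarrow> bool \<Rightarrow> bool list \<Rightarrow> bool list" where
  "face_fun i e v = take (i - 1) v @ e # drop (i - 1) v"

definition degen_fun :: "nat \<Rightarrow> bool list \<Rightarrow> bool list" where
  "degen_fun i v = take (i - 1) v @ drop i v"

definition conn_fun :: "nat \<Rightarrow> bool \<Rightarrow> bool list \<Rightarrow> bool list" where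
  "conn_fun i e v = take (i - 1) v
      @ (if e then (v ! (i - 1) \<or> v ! i) else (v ! (i - 1) \<and> v ! i)) # drop (i + 1) v"

inductive raw_box :: "nat \<Rightarrow> nat \<Rightarrow> (bool list \<Rightarrow> bool list) \<Rightarrow> bool" where
  rb_id: "raw_box n n id"
| rb_face: "1 \<le> i \<Longrightarrow> i \<le> Suc m \<Longrightarrow> raw_box m (Suc m) (face_fun i e)"
| rb_degen: "1 \<le> i \<Longrightarrow> i \<le> Suc m \<Longrightarrow> raw_box (Suc m) m (degen_fun i)"
| rb_conn: "1 \<le> i \<Longrightarrow> i \<le> Suc m \<Longrightarrow> raw_box (Suc (Suc m)) (Suc m) (conn_fun i e)"
| rb_comp: "raw_box m n f \<Longrightarrow> raw_box k m g \<Longrightarrow> raw_box k n (f \<circ> g)"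

definition box_hom :: "nat \<Rightarrow> nat \<Rightarrow> (bool list \<Rightarrow> bool list) set" where
  "box_hom m n = canon m ` {f. raw_box m n f}"

text \<open>A cubical set (presheaf on the box category) with a marking: cells n = the n-cubes,
act x m \<phi> = x\<phi> (right action) for x an n-cube and \<phi> : [1]^m -> [1]^n,
marked n = the marked n-cubes.\<close>

record 'c mcset =
  cells :: "nat \<Rightarrow> 'c set"
  act :: "'c \<Rightarrow> nat \<Rightarrow> (bool list \<Rightarrow> bool list) \<Rightarrow> 'c"
  marked :: "nat \<Rightarrow> 'c set"

definition cubical_set :: "('c, 'z) mcset_scheme \<Rightarrow> bool" where
  "cubical_set X \<longleftrightarrow>
     (\<forall>n m x \<phi>. x \<in> cells X n \<longrightarrow> \<phi> \<in> box_hom m n \<longrightarrow> act X x m \<phi> \<in> cells X m) \<and>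
     (\<forall>n x. x \<in> cells X n \<longrightarrow> act X x n (canon n id) = x) \<and>
     (\<forall>n m k x \<phi> \<psi>. x \<in> cells X n \<longrightarrow> \<phi> \<in> box_hom m n \<longrightarrow> \<psi> \<in> box_hom k m \<longrightarrow>
         act X (act X x m \<phi>) k \<psi> = act X x k (canon k (\<phi> \<circ> \<psi>)))"

definition degenerate :: "('c, 'z) mcset_scheme \<Rightarrow> nat \<Rightarrow> 'c \<Rightarrow> bool" where
  "degenerate X n x \<longleftrightarrow>
     (\<exists>m y i. n = Suc m \<and> y \<in> cells X m \<and> 1 \<le> i \<and> i \<le> Suc m \<and>
        x = act X y n (canon n (degen_fun i))) \<or>
     (\<exists>m y i e. n = Suc (Suc m) \<and> y \<in> cells X (Suc m) \<and> 1 \<le> i \<and> i \<le> Suc m \<and>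
        x = act X y n (canon n (conn_fun i e)))"

definition marked_cset :: "('c, 'z) mcset_scheme \<Rightarrow> bool" where
  "marked_cset X \<longleftrightarrow> cubical_set X \<and> marked X 0 = {} \<and>
     (\<forall>n. marked X n \<subseteq> cells X n) \<and>
     (\<forall>n x. x \<in> cells X n \<longrightarrow> degenerate X n x \<longrightarrow> x \<in> marked X n)"

definition mmap :: "('a, 'y) mcset_scheme \<Rightarrow> ('c, 'z) mcset_scheme \<Rightarrow> (nat \<Rightarrow> 'a \<Rightarrow> 'c) \<Rightarrow> bool" where
  "mmap A X F \<longleftrightarrow>
     (\<forall>n a. a \<in> cells A n \<longrightarrow> F n a \<in> cells X n) \<and>
     (\<forall>n m a \<phi>. a \<in> cells A n \<longrightarrow> \<phi> \<in> box_hom m n \<longrightarrow> F m (act A a m \<phi>) = act X (F n a) m \<phi>) \<and>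
     (\<forall>n a. a \<in> marked A n \<longrightarrow> F n a \<in> marked X n)"

text \<open>Right lifting property of X against the inclusion A \<hookrightarrow> B (A a marked sub-object of B):
every map A -> X extends along the inclusion to a map B -> X.\<close>
definition rlp :: "('a, 'y) mcset_scheme \<Rightarrow> ('a, 'y) mcset_scheme \<Rightarrow> ('c, 'z) mcset_scheme \<Rightarrow> bool" where
  "rlp A B X \<longleftrightarrow> (\<forall>F. mmap A X F \<longrightarrow>
     (\<exists>G. mmap B X G \<and> (\<forall>n a. a \<in> cells A n \<longrightarrow> G n a = F n a)))"

definition std_cube :: "nat \<Rightarrow> (bool list \<Rightarrow> bool list) mcset" where
  "std_cube n = \<lparr>cells = (\<lambda>m. box_hom m n), act = (\<lambda>\<phi> m \<psi>. canon m (\<phi> \<circ> \<psi>)),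
                 marked = (\<lambda>m. {})\<rparr>"

definition face_comp :: "(nat \<times> bool) list \<Rightarrow> bool list \<Rightarrow> bool list" where
  "face_comp l = foldr (\<lambda>(i, e) f. face_fun i e \<circ> f) l id"

text \<open>normal form of a composite of faces into [1]^n: strictly decreasing indices\<close>
definition face_nf :: "nat \<Rightarrow> (nat \<times> bool) list \<Rightarrow> bool" where
  "face_nf n l \<longleftrightarrow> sorted_wrt (\<lambda>a b. fst a > fst b) l \<and> length l \<le> n \<and>
     (\<forall>p \<in> set l. 1 \<le> fst p \<and> fst p \<le> n)"

definition bad_factors :: "nat \<Rightarrow> bool \<Rightarrow> (nat \<times> bool) set" where
  "bad_factors k e = {(k - 1, e), (k, False), (k, True), (k + 1, e)}"

definition box_marking :: "nat \<Rightarrow> nat \<Rightarrow> bool \<Rightarrow> nat \<Rightarrow> (bool list \<Rightarrow> bool list) set" where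
  "box_marking n k e m = {\<phi> \<in> box_hom m n. 1 \<le> m \<and>
      (degenerate (std_cube n) m \<phi> \<or>
       (\<exists>l. face_nf n l \<and> length l = n - m \<and> \<phi> = canon m (face_comp l) \<and> set l \<inter> bad_factors k e = {}))}"

definition box_ke :: "nat \<Rightarrow> nat \<Rightarrow> bool \<Rightarrow> (bool list \<Rightarrow> bool list) mcset" where
  "box_ke n k e = (std_cube n)\<lparr>marked := box_marking n k e\<rparr>"

definition horn_cells :: "nat \<Rightarrow> nat \<Rightarrow> bool \<Rightarrow> nat \<Rightarrow> (bool list \<Rightarrow> bool list) set" where
  "horn_cells n k e m = {canon m (canon (n - 1) (face_fun i d) \<circ> \<psi>) | i d \<psi>.
      1 \<le> i \<and> i \<le> n \<and> (i, d) \<noteq> (k, e) \<and> \<psi> \<in> box_hom m (n - 1)}"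

definition horn :: "nat \<Rightarrow> nat \<Rightarrow> bool \<Rightarrow> (bool list \<Rightarrow> bool list) mcset" where
  "horn n k e = \<lparr>cells = horn_cells n k e, act = (\<lambda>\<phi> m \<psi>. canon m (\<phi> \<circ> \<psi>)),
                 marked = (\<lambda>m. box_marking n k e m \<inter> horn_cells n k e m)\<rparr>"

definition box_ke' :: "nat \<Rightarrow> nat \<Rightarrow> bool \<Rightarrow> (bool list \<Rightarrow> bool list) mcset" where
  "box_ke' n k e = (std_cube n)\<lparr>marked := (\<lambda>m. box_marking n k e m \<union>
      (if m = n - 1 then {canon (n - 1) (face_fun i d) | i d. 1 \<le> i \<and> i \<le> n \<and> (i, d) \<noteq> (k, e)}
       else {}))\<rparr>"

definition box_ke'' :: "nat \<Rightarrow> nat \<Rightarrow> bool \<Rightarrow> (bool list \<Rightarrow> bool list) mcset" where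
  "box_ke'' n k e = (std_cube n)\<lparr>marked := (\<lambda>m. box_marking n k e m \<union>
      (if n - 1 \<le> m then box_hom m n else {}))\<rparr>"

definition comical :: "('c, 'z) mcset_scheme \<Rightarrow> bool" where
  "comical X \<longleftrightarrow> marked_cset X \<and>
     (\<forall>n k e. 1 \<le> n \<longrightarrow> 1 \<le> k \<longrightarrow> k \<le> n \<longrightarrow> rlp (horn n k e) (box_ke n k e) X) \<and>
     (\<forall>n k e. 2 \<le> n \<longrightarrow> 1 \<le> k \<longrightarrow> k \<le> n \<longrightarrow> rlp (box_ke' n k e) (box_ke'' n k e) X)"

definition fc :: "('c, 'z) mcset_scheme \<Rightarrow> nat \<Rightarrow> 'c \<Rightarrow> nat \<Rightarrow> bool \<Rightarrow> 'c" where
  "fc X n x i e = act X x (n - 1) (canon (n - 1) (face_fun i e))"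

definition sig1 :: "('c, 'z) mcset_scheme \<Rightarrow> 'c \<Rightarrow> 'c" where
  "sig1 X x = act X x 1 (canon 1 (degen_fun 1))"

definition hom1 :: "('c, 'z) mcset_scheme \<Rightarrow> 'c \<Rightarrow> 'c \<Rightarrow> 'c \<Rightarrow> bool" where
  "hom1 X x y f \<longleftrightarrow> f \<in> cells X 1 \<and> fc X 1 f 1 False = x \<and> fc X 1 f 1 True = y"

definition msq :: "('c, 'z) mcset_scheme \<Rightarrow> 'c \<Rightarrow> 'c \<Rightarrow> 'c \<Rightarrow> 'c \<Rightarrow> 'c \<Rightarrow> bool" where
  "msq X s a b c d \<longleftrightarrow> s \<in> marked X 2 \<and>
     fc X 2 s 1 False = a \<and> fc X 2 s 1 True = b \<and> fc X 2 s 2 False = c \<and> fc X 2 s 2 True = d"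

definition htpy :: "('c, 'z) mcset_scheme \<Rightarrow> 'c \<Rightarrow> 'c \<Rightarrow> 'c \<Rightarrow> 'c \<Rightarrow> bool" where
  "htpy X x y f g \<longleftrightarrow> hom1 X x y f \<and> hom1 X x y g \<and>
     (\<exists>s. msq X s g (sig1 X y) f (sig1 X y))"

definition composite :: "('c, 'z) mcset_scheme \<Rightarrow> 'c \<Rightarrow> 'c \<Rightarrow> 'c \<Rightarrow> 'c \<Rightarrow> 'c \<Rightarrow> 'c \<Rightarrow> bool" where
  "composite X x y z f g a \<longleftrightarrow> hom1 X x y f \<and> hom1 X y z g \<and>
     ((\<exists>s. msq X s a g f (sig1 X z)) \<or>
      (\<exists>s. msq X s f a (sig1 X x) g) \<or>
      (\<exists>s. msq X s f (sig1 X z) a g) \<or>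
      (\<exists>s. msq X s (sig1 X x) g f a))"

end

theory Submission
  imports Defs
begin

lemma face_len: "i - 1 \<le> length v \<Longrightarrow> length (face_fun i e v) = Suc (length v)"
  by (simp add: face_fun_def)

lemma face_nth: "i - 1 \<le> length v \<Longrightarrow> p \<le> length v \<Longrightarrow>
   face_fun i e v ! p = (if p < i - 1 then v ! p else if p = i - 1 then e else v ! (p - 1))"
  unfolding face_fun_def
  by (auto simp: nth_append min_def nth_Cons' split: if_splits)

lemma degen_len: "1 \<le> i \<Longrightarrow> i \<le> length v \<Longrightarrow> length (degen_fun i v) = length v - 1"
  by (simp add: degen_fun_def)

lemma degen_nth: "1 \<le> i \<Longrightarrow> i \<le> length v \<Longrightarrow> p < length v - 1 \<Longrightarrow>
   degen_fun i v ! p = (if p < i - 1 then v ! p else v ! Suc p)"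
  unfolding degen_fun_def
  by (auto simp: nth_append min_def)

lemma conn_len: "1 \<le> i \<Longrightarrow> i < length v \<Longrightarrow> length (conn_fun i e v) = length v - 1"
  by (simp add: conn_fun_def)

lemma raw_box_len: "raw_box m n f \<Longrightarrow> length v = m \<Longrightarrow> length (f v) = n"
  by (induction arbitrary: v rule: raw_box.induct)
     (auto simp: face_len degen_len conn_len)


lemma canon_eqI: "(\<And>v. length v = m \<Longrightarrow> f v = g v) \<Longrightarrow> canon m f = canon m g"
  by (auto simp: canon_def)

lemma box_hom_canon: "\<phi> \<in> box_hom m n \<Longrightarrow> canon m \<phi> = \<phi>"
  by (auto simp: box_hom_def canon_def)

lemma box_hom_len: "\<phi> \<in> box_hom m n \<Longrightarrow> length v = m \<Longrightarrow> length (\<phi> v) = n"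
  by (auto simp: box_hom_def canon_def raw_box_len)

lemma box_hom_out: "\<phi> \<in> box_hom m n \<Longrightarrow> length v \<noteq> m \<Longrightarrow> \<phi> v = []"
  by (auto simp: box_hom_def canon_def)

lemma box_hom_raw: "raw_box m n f \<Longrightarrow> canon m f \<in> box_hom m n"
  by (auto simp: box_hom_def)

lemma box_hom_comp:
  assumes "\<phi> \<in> box_hom m n" "\<psi> \<in> box_hom k m"
  shows "canon k (\<phi> \<circ> \<psi>) \<in> box_hom k n"
proof -
  obtain f where f: "raw_box m n f" "\<phi> = canon m f" using assms(1) by (auto simp: box_hom_def)
  obtain g where g: "raw_box k m g" "\<psi> = canon k g" using assms(2) by (auto simp: box_hom_def)
  have "canon k (\<phi> \<circ> \<psi>) = canon k (f \<circ> g)"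
  proof (rule canon_eqI)
    fix v :: "bool list" assume "length v = k"
    then have "length (g v) = m" using g(1) raw_box_len by blast
    then show "(\<phi> \<circ> \<psi>) v = (f \<circ> g) v" using \<open>length v = k\<close> by (simp add: f g canon_def)
  qed
  moreover have "raw_box k n (f \<circ> g)" using f g by (auto intro: rb_comp)
  ultimately show ?thesis by (simp add: box_hom_raw)
qed

lemma id_hom: "canon n id \<in> box_hom n n"
  by (rule box_hom_raw) (rule rb_id)

lemma face_hom: "1 \<le> i \<Longrightarrow> i \<le> Suc n \<Longrightarrow> canon n (face_fun i e) \<in> box_hom n (Suc n)"
  by (rule box_hom_raw) (rule rb_face)

lemma face_hom': "1 \<le> i \<Longrightarrow> i \<le> n \<Longrightarrow> canon (n - 1) (face_fun i e) \<in> box_hom (n - 1) n"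
  using face_hom[of i "n - 1" e] by simp

lemma degen_hom: "1 \<le> i \<Longrightarrow> i \<le> Suc n \<Longrightarrow> canon (Suc n) (degen_fun i) \<in> box_hom (Suc n) n"
  by (rule box_hom_raw) (rule rb_degen)

lemma degen_hom': "1 \<le> i \<Longrightarrow> i \<le> n \<Longrightarrow> canon n (degen_fun i) \<in> box_hom n (n - 1)"
  using degen_hom[of i "n - 1"] by simp

lemma conn_hom: "1 \<le> i \<Longrightarrow> i \<le> Suc n \<Longrightarrow> canon (Suc (Suc n)) (conn_fun i e) \<in> box_hom (Suc (Suc n)) (Suc n)"
  by (rule box_hom_raw) (rule rb_conn)

lemma canon_comp_canon: "\<psi> \<in> box_hom k m \<Longrightarrow> canon k (canon m f \<circ> \<psi>) = canon k (f \<circ> \<psi>)"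
  by (rule canon_eqI) (auto simp: canon_def box_hom_len)

lemma canon_comp_canon2: "canon k (f \<circ> canon k g) = canon k (f \<circ> g)"
  by (rule canon_eqI) (auto simp: canon_def)

context
  fixes X :: "('c, 'z) mcset_scheme"
  assumes cs: "cubical_set X"
begin

lemma act_cell: "x \<in> cells X n \<Longrightarrow> \<phi> \<in> box_hom m n \<Longrightarrow> act X x m \<phi> \<in> cells X m"
  using cs by (auto simp: cubical_set_def)

lemma act_id: "x \<in> cells X n \<Longrightarrow> act X x n (canon n id) = x"
  using cs by (auto simp: cubical_set_def)

lemma act_act: "x \<in> cells X n \<Longrightarrow> \<phi> \<in> box_hom m n \<Longrightarrow> \<psi> \<in> box_hom k m \<Longrightarrow>
   act X (act X x m \<phi>) k \<psi> = act X x k (canon k (\<phi> \<circ> \<psi>))"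
  using cs unfolding cubical_set_def by blast

end


lemma face_degen:
  assumes "1 \<le> p" "p \<le> length u" "u ! (p - 1) = e"
  shows "face_fun p e (degen_fun p u) = u"
proof (rule nth_equalityI)
  have dl: "length (degen_fun p u) = length u - 1" using assms by (simp add: degen_len)
  show "length (face_fun p e (degen_fun p u)) = length u"
    using assms dl by (simp add: face_len)
  fix q assume q: "q < length (face_fun p e (degen_fun p u))"
  then have q': "q < length u" using assms dl by (simp add: face_len)
  show "face_fun p e (degen_fun p u) ! q = u ! q"
    using assms dl q' by (auto simp: face_nth degen_nth)
qed

lemma degen_face: "1 \<le> p \<Longrightarrow> p - 1 \<le> length w \<Longrightarrow> degen_fun p (face_fun p e w) = w"
  unfolding face_fun_def degen_fun_def
  by (cases p) auto





lemma degen_degen':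
  assumes "1 \<le> i" "i < j" "j \<le> length w"
  shows "degen_fun (j - 1) (degen_fun i w) = degen_fun i (degen_fun j w)"
proof (rule nth_equalityI)
  have l1: "length (degen_fun i w) = length w - 1" using assms by (simp add: degen_len)
  have l2: "length (degen_fun j w) = length w - 1" using assms by (simp add: degen_len)
  show "length (degen_fun (j - 1) (degen_fun i w)) = length (degen_fun i (degen_fun j w))"
    using assms l1 l2 by (simp add: degen_len)
  fix q assume "q < length (degen_fun (j - 1) (degen_fun i w))"
  then have q: "q < length w - 2" using assms l1 by (simp add: degen_len)
  have L: "degen_fun (j - 1) (degen_fun i w) ! q = (if q < j - 2 then degen_fun i w ! q else degen_fun i w ! Suc q)"
    using degen_nth[of "j - 1" "degen_fun i w" q] assms l1 q by (simp add: numeral_2_eq_2)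
  have R: "degen_fun i (degen_fun j w) ! q = (if q < i - 1 then degen_fun j w ! q else degen_fun j w ! Suc q)"
    using degen_nth[of i "degen_fun j w" q] assms l2 q by simp
  have A: "\<And>r. r < length w - 1 \<Longrightarrow> degen_fun i w ! r = (if r < i - 1 then w ! r else w ! Suc r)"
    using degen_nth[of i w] assms by simp
  have B: "\<And>r. r < length w - 1 \<Longrightarrow> degen_fun j w ! r = (if r < j - 1 then w ! r else w ! Suc r)"
    using degen_nth[of j w] assms by simp
  have A0: "degen_fun i w ! q = (if q < i - 1 then w ! q else w ! Suc q)" using A q by simp
  have A1: "degen_fun i w ! Suc q = (if Suc q < i - 1 then w ! Suc q else w ! Suc (Suc q))" using A q by simp
  have B0: "degen_fun j w ! q = (if q < j - 1 then w ! q else w ! Suc q)" using B q by simp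
  have B1: "degen_fun j w ! Suc q = (if Suc q < j - 1 then w ! Suc q else w ! Suc (Suc q))" using B q by simp
  show "degen_fun (j - 1) (degen_fun i w) ! q = degen_fun i (degen_fun j w) ! q"
    unfolding L R A0 A1 B0 B1 using assms by auto
qed

lemma face_face':
  assumes "1 \<le> i" "i < j" "j - 2 \<le> length v"
  shows "face_fun i d (face_fun (j - 1) d' v) = face_fun j d' (face_fun i d v)"
proof (rule nth_equalityI)
  have l1: "length (face_fun (j - 1) d' v) = Suc (length v)" using assms by (simp add: face_len)
  have l2: "length (face_fun i d v) = Suc (length v)" using assms by (simp add: face_len)
  show "length (face_fun i d (face_fun (j - 1) d' v)) = length (face_fun j d' (face_fun i d v))"
    using assms l1 l2 by (simp add: face_len)
  fix q assume "q < length (face_fun i d (face_fun (j - 1) d' v))"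
  then have q: "q < length v + 2" using assms l1 by (simp add: face_len)
  have L: "face_fun i d (face_fun (j - 1) d' v) ! q = (if q < i - 1 then face_fun (j - 1) d' v ! q
       else if q = i - 1 then d else face_fun (j - 1) d' v ! (q - 1))"
    using face_nth[of i "face_fun (j - 1) d' v" q d] assms l1 q by simp
  have R: "face_fun j d' (face_fun i d v) ! q = (if q < j - 1 then face_fun i d v ! q
       else if q = j - 1 then d' else face_fun i d v ! (q - 1))"
    using face_nth[of j "face_fun i d v" q d'] assms l2 q by simp
  have A: "\<And>r. r \<le> length v \<Longrightarrow> face_fun (j - 1) d' v ! r =
      (if r < j - 2 then v ! r else if r = j - 2 then d' else v ! (r - 1))"
    using face_nth[of "j - 1" v _ d'] assms by (simp add: numeral_2_eq_2)
  have B: "\<And>r. r \<le> length v \<Longrightarrow> face_fun i d v ! r =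
      (if r < i - 1 then v ! r else if r = i - 1 then d else v ! (r - 1))"
    using face_nth[of i v _ d] assms by simp
  show "face_fun i d (face_fun (j - 1) d' v) ! q = face_fun j d' (face_fun i d v) ! q"
  proof (cases "q = 0")
    case True
    then show ?thesis unfolding L R using A[of 0] B[of 0] assms by auto
  next
    case False
    have A0: "q \<le> length v \<Longrightarrow> face_fun (j - 1) d' v ! q =
      (if q < j - 2 then v ! q else if q = j - 2 then d' else v ! (q - 1))" using A by simp
    have A1: "face_fun (j - 1) d' v ! (q - 1) =
      (if q - 1 < j - 2 then v ! (q - 1) else if q - 1 = j - 2 then d' else v ! (q - 1 - 1))"
      using A[of "q - 1"] q False by simp
    have B0: "q \<le> length v \<Longrightarrow> face_fun i d v ! q =
      (if q < i - 1 then v ! q else if q = i - 1 then d else v ! (q - 1))" using B by simp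
    have B1: "face_fun i d v ! (q - 1) =
      (if q - 1 < i - 1 then v ! (q - 1) else if q - 1 = i - 1 then d else v ! (q - 1 - 1))"
      using B[of "q - 1"] q False by simp
    consider "q < i - 1" | "q = i - 1" | "i - 1 < q \<and> q < j - 1" | "q = j - 1" | "j - 1 < q"
      by linarith
    then show ?thesis
    proof cases
      case 1
      then have "q \<le> length v" "q < j - 2" "q < j - 1" using assms q by auto
      then show ?thesis using 1 A0 B0 unfolding L R by simp
    next
      case 2
      then have "q \<le> length v" "q < j - 1" using assms q by auto
      then show ?thesis using 2 A0 B0 unfolding L R by simp
    next
      case 3
      then have "q - 1 < j - 2" "\<not> q < i - 1" "q \<noteq> i - 1" "q \<le> length v" using assms q by auto
      then show ?thesis using 3 A1 B0 unfolding L R by simp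
    next
      case 4
      then have "q - 1 = j - 2" "\<not> q < i - 1" "q \<noteq> i - 1" using assms q False by auto
      then show ?thesis using 4 A1 B0 unfolding L R by simp
    next
      case 5
      then have "\<not> q - 1 < j - 2" "q - 1 \<noteq> j - 2" "\<not> q < i - 1" "q \<noteq> i - 1"
        "\<not> q - 1 < i - 1" "q - 1 \<noteq> i - 1" "\<not> q < j - 1" "q \<noteq> j - 1" using assms q by auto
      then show ?thesis using A1 B1 unfolding L R by simp
    qed
  qed
qed

lemma conn_face':
  assumes "1 \<le> i" "i \<le> length w"
  shows "conn_fun i e (face_fun (Suc i) (\<not> e) w) = w"
proof -
  let ?u = "face_fun (Suc i) (\<not> e) w"
  have u1: "?u ! (i - 1) = w ! (i - 1)" using assms by (simp add: face_nth)
  have u2: "?u ! i = (\<not> e)" using assms by (simp add: face_nth)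
  have t: "take (i - 1) ?u = take (i - 1) w" using assms by (simp add: face_fun_def)
  have d: "drop (i + 1) ?u = drop i w" using assms by (simp add: face_fun_def)
  have "w = take (i - 1) w @ w ! (i - 1) # drop (Suc (i - 1)) w"
    using id_take_nth_drop[of "i - 1" w] assms by simp
  then show ?thesis unfolding conn_fun_def u1 u2 t d using assms by (cases e) auto
qed

lemma fc_fc:
  assumes cs: "cubical_set X" and x: "x \<in> cells X (Suc (Suc m))"
    and ij: "1 \<le> i" "i < j" "j \<le> Suc (Suc m)"
  shows "fc X (Suc m) (fc X (Suc (Suc m)) x i d) (j - 1) d' = fc X (Suc m) (fc X (Suc (Suc m)) x j d') i d"
proof -
  have h1: "canon (Suc m) (face_fun i d) \<in> box_hom (Suc m) (Suc (Suc m))" using ij by (intro face_hom) auto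
  have h2: "canon (Suc m) (face_fun j d') \<in> box_hom (Suc m) (Suc (Suc m))" using ij by (intro face_hom) auto
  have h3: "canon m (face_fun (j - 1) d') \<in> box_hom m (Suc m)" using ij by (intro face_hom) auto
  have h4: "canon m (face_fun i d) \<in> box_hom m (Suc m)" using ij by (intro face_hom) auto
  have "canon m (canon (Suc m) (face_fun i d) \<circ> canon m (face_fun (j - 1) d'))
      = canon m (canon (Suc m) (face_fun j d') \<circ> canon m (face_fun i d))"
  proof (rule canon_eqI)
    fix v :: "bool list" assume v: "length v = m"
    have "face_fun i d (face_fun (j - 1) d' v) = face_fun j d' (face_fun i d v)"
      using ij v by (intro face_face') auto
    then show "(canon (Suc m) (face_fun i d) \<circ> canon m (face_fun (j - 1) d')) v =
          (canon (Suc m) (face_fun j d') \<circ> canon m (face_fun i d)) v"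
      using v ij by (simp add: canon_def face_len)
  qed
  then show ?thesis
    unfolding fc_def using act_act[OF cs x h1 h3] act_act[OF cs x h2 h4] by simp
qed

definition adm :: "nat \<Rightarrow> nat \<Rightarrow> bool \<Rightarrow> nat \<Rightarrow> (bool list \<Rightarrow> bool list) \<Rightarrow> nat \<Rightarrow> bool \<Rightarrow> bool" where
  "adm n k e m \<phi> i d \<longleftrightarrow> 1 \<le> i \<and> i \<le> n \<and> (i, d) \<noteq> (k, e) \<and> (\<forall>v. length v = m \<longrightarrow> \<phi> v ! (i - 1) = d)"

definition hval :: "('c, 'z) mcset_scheme \<Rightarrow> (nat \<Rightarrow> bool \<Rightarrow> 'c) \<Rightarrow> nat \<Rightarrow> (bool list \<Rightarrow> bool list) \<Rightarrow> nat \<Rightarrow> bool \<Rightarrow> 'c" where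
  "hval X c m \<phi> i d = act X (c i d) m (canon m (degen_fun i \<circ> \<phi>))"

definition hmap :: "('c, 'z) mcset_scheme \<Rightarrow> (nat \<Rightarrow> bool \<Rightarrow> 'c) \<Rightarrow> nat \<Rightarrow> nat \<Rightarrow> bool \<Rightarrow> nat \<Rightarrow> (bool list \<Rightarrow> bool list) \<Rightarrow> 'c" where
  "hmap X c n k e m \<phi> = (let p = SOME p. adm n k e m \<phi> (fst p) (snd p) in hval X c m \<phi> (fst p) (snd p))"

lemma degen_comp_hom:
  assumes "\<phi> \<in> box_hom m n" "1 \<le> i" "i \<le> n"
  shows "canon m (degen_fun i \<circ> \<phi>) \<in> box_hom m (n - 1)"
proof -
  have "canon n (degen_fun i) \<in> box_hom n (n - 1)" using assms by (intro degen_hom') auto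
  from box_hom_comp[OF this assms(1)] show ?thesis using canon_comp_canon[OF assms(1)] by simp
qed

lemma hval_wd_lt:
  assumes cs: "cubical_set X"
    and cells: "c i d \<in> cells X (Suc n')" "c j d' \<in> cells X (Suc n')"
    and compat: "fc X (Suc n') (c i d) (j - 1) d' = fc X (Suc n') (c j d') i d"
    and phi: "\<phi> \<in> box_hom m (Suc (Suc n'))"
    and ij: "1 \<le> i" "i < j" "j \<le> Suc (Suc n')"
    and ci: "\<And>v. length v = m \<Longrightarrow> \<phi> v ! (i - 1) = d"
    and cj: "\<And>v. length v = m \<Longrightarrow> \<phi> v ! (j - 1) = d'"
  shows "hval X c m \<phi> i d = hval X c m \<phi> j d'"
proof -
  let ?n = "Suc (Suc n')"
  define \<rho> where "\<rho> = canon m (degen_fun (j - 1) \<circ> degen_fun i \<circ> \<phi>)"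
  have hi: "canon m (degen_fun i \<circ> \<phi>) \<in> box_hom m (Suc n')" using degen_comp_hom[OF phi, of i] ij by simp
  have hj: "canon m (degen_fun j \<circ> \<phi>) \<in> box_hom m (Suc n')" using degen_comp_hom[OF phi, of j] ij by simp
  have "canon m (degen_fun (j - 1) \<circ> canon m (degen_fun i \<circ> \<phi>)) \<in> box_hom m n'"
    using degen_comp_hom[OF hi, of "j - 1"] ij by simp
  then have rho: "\<rho> \<in> box_hom m n'" unfolding \<rho>_def canon_comp_canon2 by (simp add: comp_assoc)
  have f1: "canon n' (face_fun (j - 1) d') \<in> box_hom n' (Suc n')" using ij by (intro face_hom) auto
  have f2: "canon n' (face_fun i d) \<in> box_hom n' (Suc n')" using ij by (intro face_hom) auto
  have e1: "canon m (degen_fun i \<circ> \<phi>) = canon m (canon n' (face_fun (j - 1) d') \<circ> \<rho>)"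
  proof (rule canon_eqI)
    fix v :: "bool list" assume v: "length v = m"
    let ?w = "\<phi> v"
    have lw: "length ?w = ?n" using box_hom_len[OF phi v] .
    have ld: "length (degen_fun i ?w) = Suc n'" using lw ij by (simp add: degen_len)
    have a: "\<not> (j - 1 - 1 < i - 1)" "Suc (j - 1 - 1) = j - 1" "j - 1 - 1 < length ?w - 1"
      using ij lw by auto
    have "degen_fun i ?w ! (j - 1 - 1) = ?w ! Suc (j - 1 - 1)"
      using degen_nth[of i ?w "j - 1 - 1"] lw ij a(1,3) by auto
    then have nth: "degen_fun i ?w ! (j - 1 - 1) = d'" using a(2) cj[OF v] by simp
    have "face_fun (j - 1) d' (degen_fun (j - 1) (degen_fun i ?w)) = degen_fun i ?w"
      using face_degen[of "j - 1" "degen_fun i ?w" d'] ld ij nth by simp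
    moreover have "length (degen_fun (j - 1) (degen_fun i ?w)) = n'" using ld ij by (simp add: degen_len)
    ultimately show "(degen_fun i \<circ> \<phi>) v = (canon n' (face_fun (j - 1) d') \<circ> \<rho>) v"
      using v by (simp add: \<rho>_def canon_def)
  qed
  have e2: "canon m (degen_fun j \<circ> \<phi>) = canon m (canon n' (face_fun i d) \<circ> \<rho>)"
  proof (rule canon_eqI)
    fix v :: "bool list" assume v: "length v = m"
    let ?w = "\<phi> v"
    have lw: "length ?w = ?n" using box_hom_len[OF phi v] .
    have ld: "length (degen_fun j ?w) = Suc n'" using lw ij by (simp add: degen_len)
    have a: "i - 1 < j - 1" "i - 1 < length ?w - 1" using ij lw by auto
    have "degen_fun j ?w ! (i - 1) = ?w ! (i - 1)"
      using degen_nth[of j ?w "i - 1"] lw ij a by auto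
    then have nth: "degen_fun j ?w ! (i - 1) = d" using ci[OF v] by simp
    have "face_fun i d (degen_fun i (degen_fun j ?w)) = degen_fun j ?w"
      using face_degen[of i "degen_fun j ?w" d] ld ij nth by simp
    moreover have "degen_fun i (degen_fun j ?w) = degen_fun (j - 1) (degen_fun i ?w)"
      using degen_degen'[of i j ?w] ij lw by simp
    moreover have "length (degen_fun (j - 1) (degen_fun i ?w)) = n'"
      using lw ij by (simp add: degen_len)
    ultimately show "(degen_fun j \<circ> \<phi>) v = (canon n' (face_fun i d) \<circ> \<rho>) v"
      using v by (simp add: \<rho>_def canon_def)
  qed
  have "hval X c m \<phi> i d = act X (fc X (Suc n') (c i d) (j - 1) d') m \<rho>"
    unfolding hval_def e1 fc_def using act_act[OF cs cells(1) f1 rho] by simp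
  moreover have "hval X c m \<phi> j d' = act X (fc X (Suc n') (c j d') i d) m \<rho>"
    unfolding hval_def e2 fc_def using act_act[OF cs cells(2) f2 rho] by simp
  ultimately show ?thesis using compat by simp
qed


lemma face_len_any: "length (face_fun i e v) = Suc (length v)"
  by (simp add: face_fun_def)

lemma face_comp_Nil: "face_comp [] = id"
  by (simp add: face_comp_def)

lemma face_comp_Cons: "face_comp ((i, d) # t) = face_fun i d \<circ> face_comp t"
  by (simp add: face_comp_def)

lemma face_comp_len: "length (face_comp l v) = length v + length l"
  by (induction l) (auto simp: face_comp_def face_len_any)

lemma ex_len: "\<exists>v :: bool list. length v = m"
  by (rule exI[of _ "replicate m False"]) simp

lemma bad_self: "(k, e) \<in> bad_factors k e"
  by (simp add: bad_factors_def)

lemma adm_of_horn: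
  assumes "\<phi> \<in> horn_cells n k e m"
  shows "\<phi> \<in> box_hom m n \<and> (\<exists>i d. adm n k e m \<phi> i d)"
proof -
  obtain i d \<psi> where h: "\<phi> = canon m (canon (n - 1) (face_fun i d) \<circ> \<psi>)" "1 \<le> i" "i \<le> n"
    "(i, d) \<noteq> (k, e)" "\<psi> \<in> box_hom m (n - 1)"
    using assms unfolding horn_cells_def by blast
  have "\<phi> \<in> box_hom m n" unfolding h(1) by (rule box_hom_comp[OF face_hom' h(5)]) (use h in auto)
  moreover have "adm n k e m \<phi> i d"
    unfolding adm_def using h box_hom_len[OF h(5)] by (auto simp: canon_def face_nth)
  ultimately show ?thesis by blast
qed

lemma horn_of_adm:
  assumes phi: "\<phi> \<in> box_hom m n" and a: "adm n k e m \<phi> i d"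
  shows "\<phi> \<in> horn_cells n k e m"
proof -
  have i: "1 \<le> i" "i \<le> n" "(i, d) \<noteq> (k, e)" using a by (auto simp: adm_def)
  have psi: "canon m (degen_fun i \<circ> \<phi>) \<in> box_hom m (n - 1)" using degen_comp_hom[OF phi i(1,2)] .
  have "\<phi> = canon m (canon (n - 1) (face_fun i d) \<circ> canon m (degen_fun i \<circ> \<phi>))"
  proof -
    have "canon m \<phi> = canon m (canon (n - 1) (face_fun i d) \<circ> canon m (degen_fun i \<circ> \<phi>))"
    proof (rule canon_eqI)
      fix v :: "bool list" assume v: "length v = m"
      have l: "length (\<phi> v) = n" using box_hom_len[OF phi v] .
      have "face_fun i d (degen_fun i (\<phi> v)) = \<phi> v"
        using face_degen[of i "\<phi> v" d] i l a v by (auto simp: adm_def)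
      then show "\<phi> v = (canon (n - 1) (face_fun i d) \<circ> canon m (degen_fun i \<circ> \<phi>)) v"
        using v l i by (simp add: canon_def degen_len)
    qed
    then show ?thesis using box_hom_canon[OF phi] by simp
  qed
  then show ?thesis unfolding horn_cells_def using i psi by blast
qed

lemma face_comp_raw:
  "sorted_wrt (\<lambda>a b. fst a > fst b) l \<Longrightarrow> (\<forall>p\<in>set l. 1 \<le> fst p \<and> fst p \<le> N) \<Longrightarrow>
   N = m + length l \<Longrightarrow> raw_box m N (face_comp l)"
proof (induction l arbitrary: N)
  case Nil
  then show ?case using rb_id[of m] by (simp add: face_comp_Nil id_def)
next
  case (Cons a t)
  obtain i d where a: "a = (i, d)" by (cases a)
  have "raw_box m (N - 1) (face_comp t)"
    using Cons by (intro Cons.IH) (auto simp: a)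
  moreover have "raw_box (N - 1) N (face_fun i d)"
    using Cons rb_face[of i "N - 1" d] by (auto simp: a)
  ultimately show ?case unfolding a face_comp_Cons by (rule rb_comp[rotated])
qed


context
  fixes X :: "('c, 'z) mcset_scheme" and c :: "nat \<Rightarrow> bool \<Rightarrow> 'c" and n k :: nat and e :: bool
  assumes cs: "cubical_set X"
    and hcells: "\<And>i d. 1 \<le> i \<Longrightarrow> i \<le> n \<Longrightarrow> (i, d) \<noteq> (k, e) \<Longrightarrow> c i d \<in> cells X (n - 1)"
    and compat: "\<And>i j d d'. 1 \<le> i \<Longrightarrow> i < j \<Longrightarrow> j \<le> n \<Longrightarrow> (i, d) \<noteq> (k, e) \<Longrightarrow> (j, d') \<noteq> (k, e) \<Longrightarrow>
        fc X (n - 1) (c i d) (j - 1) d' = fc X (n - 1) (c j d') i d"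
begin

lemma hval_wd:
  assumes phi: "\<phi> \<in> box_hom m n" and a1: "adm n k e m \<phi> i d" and a2: "adm n k e m \<phi> j d'"
  shows "hval X c m \<phi> i d = hval X c m \<phi> j d'"
proof -
  have gen: "hval X c m \<phi> i d = hval X c m \<phi> j d'"
    if lt: "i < j" and a1: "adm n k e m \<phi> i d" and a2: "adm n k e m \<phi> j d'" for i j d d'
  proof -
    have r: "1 \<le> i" "j \<le> n" "(i, d) \<noteq> (k, e)" "(j, d') \<noteq> (k, e)" using a1 a2 by (auto simp: adm_def)
    define n' where "n' = n - 2"
    have n': "n = Suc (Suc n')" using r lt unfolding n'_def by linarith
    show ?thesis
    proof (rule hval_wd_lt[OF cs, of c i d n' j d'])
      show "c i d \<in> cells X (Suc n')" using hcells[of i d] r lt n' by simp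
      show "c j d' \<in> cells X (Suc n')" using hcells[of j d'] r lt n' by simp
      show "fc X (Suc n') (c i d) (j - 1) d' = fc X (Suc n') (c j d') i d"
        using compat[of i j d d'] r lt n' by simp
      show "\<phi> \<in> box_hom m (Suc (Suc n'))" using phi n' by simp
      show "1 \<le> i" "i < j" "j \<le> Suc (Suc n')" using r lt n' by auto
      show "\<And>v. length v = m \<Longrightarrow> \<phi> v ! (i - 1) = d" using a1 by (auto simp: adm_def)
      show "\<And>v. length v = m \<Longrightarrow> \<phi> v ! (j - 1) = d'" using a2 by (auto simp: adm_def)
    qed
  qed
  consider "i < j" | "i = j" | "j < i" by linarith
  then show ?thesis
  proof cases
    case 1 then show ?thesis using gen a1 a2 by blast
  next
    case 3 then show ?thesis using gen[OF 3 a2 a1] by simp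
  next
    case 2
    obtain v :: "bool list" where v: "length v = m" using ex_len by blast
    have "d = d'" using a1 a2 2 v by (auto simp: adm_def)
    then show ?thesis using 2 by simp
  qed
qed

lemma hmap_eq:
  assumes phi: "\<phi> \<in> box_hom m n" and a: "adm n k e m \<phi> i d"
  shows "hmap X c n k e m \<phi> = hval X c m \<phi> i d"
proof -
  let ?p = "SOME p. adm n k e m \<phi> (fst p) (snd p)"
  have "adm n k e m \<phi> (fst ?p) (snd ?p)"
    by (rule someI[of "\<lambda>p. adm n k e m \<phi> (fst p) (snd p)" "(i, d)"]) (simp add: a)
  then show ?thesis unfolding hmap_def Let_def using hval_wd[OF phi _ a] by blast
qed

lemma hval_cell:
  assumes phi: "\<phi> \<in> box_hom m n" and a: "adm n k e m \<phi> i d"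
  shows "hval X c m \<phi> i d \<in> cells X m"
proof -
  have r: "1 \<le> i" "i \<le> n" "(i, d) \<noteq> (k, e)" using a by (auto simp: adm_def)
  show ?thesis unfolding hval_def
    by (rule act_cell[OF cs hcells[OF r] degen_comp_hom[OF phi r(1,2)]])
qed

lemma hmap_natural:
  assumes phi: "\<phi> \<in> box_hom m n" and a: "adm n k e m \<phi> i d" and chi: "\<chi> \<in> box_hom m' m"
  shows "hmap X c n k e m' (canon m' (\<phi> \<circ> \<chi>)) = act X (hmap X c n k e m \<phi>) m' \<chi>"
proof -
  have r: "1 \<le> i" "i \<le> n" "(i, d) \<noteq> (k, e)" using a by (auto simp: adm_def)
  have pc: "canon m' (\<phi> \<circ> \<chi>) \<in> box_hom m' n" using box_hom_comp[OF phi chi] .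
  have a': "adm n k e m' (canon m' (\<phi> \<circ> \<chi>)) i d"
    using a box_hom_len[OF chi] by (auto simp: adm_def canon_def)
  have "hmap X c n k e m' (canon m' (\<phi> \<circ> \<chi>)) = hval X c m' (canon m' (\<phi> \<circ> \<chi>)) i d"
    by (rule hmap_eq[OF pc a'])
  also have "\<dots> = act X (hval X c m \<phi> i d) m' \<chi>"
  proof -
    have "canon m' (degen_fun i \<circ> canon m' (\<phi> \<circ> \<chi>)) = canon m' (canon m (degen_fun i \<circ> \<phi>) \<circ> \<chi>)"
      by (rule canon_eqI) (auto simp: canon_def box_hom_len[OF chi])
    then show ?thesis unfolding hval_def
      using act_act[OF cs hcells[OF r] degen_comp_hom[OF phi r(1,2)] chi] by simp
  qed
  also have "\<dots> = act X (hmap X c n k e m \<phi>) m' \<chi>" using hmap_eq[OF phi a] by simp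
  finally show ?thesis .
qed


lemma hmap_cells: "\<phi> \<in> horn_cells n k e m \<Longrightarrow> hmap X c n k e m \<phi> \<in> cells X m"
  using adm_of_horn[of \<phi> n k e m] hmap_eq hval_cell by metis

lemma hmap_deg:
  assumes mc: "marked_cset X" and phi: "\<phi> \<in> horn_cells n k e m" and dg: "degenerate (std_cube n) m \<phi>"
  shows "hmap X c n k e m \<phi> \<in> marked X m"
proof -
  obtain i d where ph: "\<phi> \<in> box_hom m n" and a: "adm n k e m \<phi> i d" using adm_of_horn[OF phi] by blast
  have r: "1 \<le> i" "i \<le> n" "(i, d) \<noteq> (k, e)" using a by (auto simp: adm_def)
  have hv: "hmap X c n k e m \<phi> = act X (c i d) m (canon m (degen_fun i \<circ> \<phi>))"
    using hmap_eq[OF ph a] by (simp add: hval_def)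
  have cid: "c i d \<in> cells X (n - 1)" using hcells[OF r] .
  have dg': "(\<exists>m' y i. m = Suc m' \<and> y \<in> cells (std_cube n) m' \<and> 1 \<le> i \<and> i \<le> Suc m' \<and>
        \<phi> = act (std_cube n) y m (canon m (degen_fun i))) \<or>
     (\<exists>m' y i e. m = Suc (Suc m') \<and> y \<in> cells (std_cube n) (Suc m') \<and> 1 \<le> i \<and> i \<le> Suc m' \<and>
        \<phi> = act (std_cube n) y m (canon m (conn_fun i e)))" using dg unfolding degenerate_def .
  from dg' have "degenerate X m (hmap X c n k e m \<phi>)"
  proof (elim disjE exE conjE)
    fix m' y i'
    assume m: "m = Suc m'" and y: "y \<in> cells (std_cube n) m'" and i': "1 \<le> i'" "i' \<le> Suc m'"
      and ph': "\<phi> = act (std_cube n) y m (canon m (degen_fun i'))"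
    have yh: "y \<in> box_hom m' n" using y by (simp add: std_cube_def)
    have phy: "\<phi> = canon m (y \<circ> canon m (degen_fun i'))" using ph' by (simp add: std_cube_def)
    have ay: "adm n k e m' y i d"
      unfolding adm_def
    proof (intro conjI allI impI)
      show "1 \<le> i" "i \<le> n" "(i, d) \<noteq> (k, e)" using r by auto
      fix w :: "bool list" assume w: "length w = m'"
      let ?v = "face_fun i' False w"
      have lv: "length ?v = m" using w m by (simp add: face_len_any)
      have "degen_fun i' ?v = w" using degen_face[of i' w False] i' w by simp
      then have "\<phi> ?v = y w" using lv by (simp add: phy canon_def)
      then show "y w ! (i - 1) = d" using a lv by (auto simp: adm_def)
    qed
    let ?z = "act X (c i d) m' (canon m' (degen_fun i \<circ> y))"
    have zc: "?z \<in> cells X m'" by (rule act_cell[OF cs cid degen_comp_hom[OF yh r(1,2)]])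
    have dh: "canon m (degen_fun i') \<in> box_hom m m'" using degen_hom[of i' m'] i' m by simp
    have "act X ?z m (canon m (degen_fun i')) = act X (c i d) m (canon m (canon m' (degen_fun i \<circ> y) \<circ> canon m (degen_fun i')))"
      by (rule act_act[OF cs cid degen_comp_hom[OF yh r(1,2)] dh])
    also have "canon m (canon m' (degen_fun i \<circ> y) \<circ> canon m (degen_fun i')) = canon m (degen_fun i \<circ> \<phi>)"
    proof (rule canon_eqI)
      fix v :: "bool list" assume v: "length v = m"
      have "length (degen_fun i' v) = m'" using v i' m by (simp add: degen_len)
      then show "(canon m' (degen_fun i \<circ> y) \<circ> canon m (degen_fun i')) v = (degen_fun i \<circ> \<phi>) v"
        using v by (simp add: canon_def phy)
    qed
    finally have eq: "act X ?z m (canon m (degen_fun i')) = act X (c i d) m (canon m (degen_fun i \<circ> \<phi>))" .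
    have "hmap X c n k e m \<phi> = act X ?z m (canon m (degen_fun i'))" using trans[OF hv eq[symmetric]] .
    then show "degenerate X m (hmap X c n k e m \<phi>)" unfolding degenerate_def using m zc i' by blast
  next
    fix m' y i' e'
    assume m: "m = Suc (Suc m')" and y: "y \<in> cells (std_cube n) (Suc m')" and i': "1 \<le> i'" "i' \<le> Suc m'"
      and ph': "\<phi> = act (std_cube n) y m (canon m (conn_fun i' e'))"
    have yh: "y \<in> box_hom (Suc m') n" using y by (simp add: std_cube_def)
    have phy: "\<phi> = canon m (y \<circ> canon m (conn_fun i' e'))" using ph' by (simp add: std_cube_def)
    have ay: "adm n k e (Suc m') y i d"
      unfolding adm_def
    proof (intro conjI allI impI)
      show "1 \<le> i" "i \<le> n" "(i, d) \<noteq> (k, e)" using r by auto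
      fix w :: "bool list" assume w: "length w = Suc m'"
      let ?v = "face_fun (Suc i') (\<not> e') w"
      have lv: "length ?v = m" using w m by (simp add: face_len_any)
      have "conn_fun i' e' ?v = w" using conn_face'[of i' w e'] i' w by simp
      then have "\<phi> ?v = y w" using lv by (simp add: phy canon_def)
      then show "y w ! (i - 1) = d" using a lv by (auto simp: adm_def)
    qed
    let ?z = "act X (c i d) (Suc m') (canon (Suc m') (degen_fun i \<circ> y))"
    have zc: "?z \<in> cells X (Suc m')" by (rule act_cell[OF cs cid degen_comp_hom[OF yh r(1,2)]])
    have dh: "canon m (conn_fun i' e') \<in> box_hom m (Suc m')" using conn_hom[of i' m' e'] i' m by simp
    have "act X ?z m (canon m (conn_fun i' e')) = act X (c i d) m (canon m (canon (Suc m') (degen_fun i \<circ> y) \<circ> canon m (conn_fun i' e')))"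
      by (rule act_act[OF cs cid degen_comp_hom[OF yh r(1,2)] dh])
    also have "canon m (canon (Suc m') (degen_fun i \<circ> y) \<circ> canon m (conn_fun i' e')) = canon m (degen_fun i \<circ> \<phi>)"
    proof (rule canon_eqI)
      fix v :: "bool list" assume v: "length v = m"
      have "length (conn_fun i' e' v) = Suc m'" using v i' m by (simp add: conn_len)
      then show "(canon (Suc m') (degen_fun i \<circ> y) \<circ> canon m (conn_fun i' e')) v = (degen_fun i \<circ> \<phi>) v"
        using v by (simp add: canon_def phy)
    qed
    finally have eq: "act X ?z m (canon m (conn_fun i' e')) = act X (c i d) m (canon m (degen_fun i \<circ> \<phi>))" .
    have "hmap X c n k e m \<phi> = act X ?z m (canon m (conn_fun i' e'))" using trans[OF hv eq[symmetric]] .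
    then show "degenerate X m (hmap X c n k e m \<phi>)" unfolding degenerate_def using m zc i' by blast
  qed
  then show ?thesis using mc hmap_cells[OF phi] by (auto simp: marked_cset_def)
qed


lemma hmap_face:
  assumes phi: "\<phi> \<in> horn_cells n k e m" and m: "1 \<le> m" and l: "face_nf n l" "length l = n - m"
    "\<phi> = canon m (face_comp l)" "set l \<inter> bad_factors k e = {}"
    and mark: "\<And>m i d t. 1 \<le> m \<Longrightarrow> face_nf n ((i, d) # t) \<Longrightarrow> m + length ((i, d) # t) = n \<Longrightarrow>
      set ((i, d) # t) \<inter> bad_factors k e = {} \<Longrightarrow> act X (c i d) m (canon m (face_comp t)) \<in> marked X m"
  shows "hmap X c n k e m \<phi> \<in> marked X m"
proof -
  obtain i0 d0 where ph: "\<phi> \<in> box_hom m n" and a0: "adm n k e m \<phi> i0 d0" using adm_of_horn[OF phi] by blast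
  obtain v0 :: "bool list" where v0: "length v0 = m" using ex_len by blast
  have len: "m + length l = n" using box_hom_len[OF ph v0] l(3) v0 by (simp add: canon_def face_comp_len)
  show ?thesis
  proof (cases l)
    case Nil
    have mn: "m = n" using len Nil by simp
    let ?v = "replicate m (\<not> d0)"
    have "\<phi> ?v = ?v" using l(3) Nil by (simp add: canon_def face_comp_Nil)
    moreover have "i0 - 1 < m" using a0 mn by (auto simp: adm_def)
    moreover have "\<phi> ?v ! (i0 - 1) = d0" using a0 by (simp add: adm_def)
    ultimately have False by simp
    then show ?thesis ..
  next
    case (Cons p t)
    obtain i d where p: "p = (i, d)" by (cases p)
    have lt: "l = (i, d) # t" using Cons p by simp
    have r: "1 \<le> i" "i \<le> n" using l(1) lt by (auto simp: face_nf_def)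
    have nb: "(i, d) \<noteq> (k, e)" using l(4) lt bad_self[of k e] by auto
    have ph2: "\<And>v. length v = m \<Longrightarrow> \<phi> v = face_fun i d (face_comp t v)"
      using l(3) lt by (simp add: canon_def face_comp_Cons)
    have lt2: "\<And>v. length v = m \<Longrightarrow> length (face_comp t v) = n - 1"
      using len lt by (simp add: face_comp_len)
    have a: "adm n k e m \<phi> i d"
      unfolding adm_def using r nb ph2 lt2 by (auto simp: face_nth)
    have "canon m (degen_fun i \<circ> \<phi>) = canon m (face_comp t)"
    proof (rule canon_eqI)
      fix v :: "bool list" assume v: "length v = m"
      show "(degen_fun i \<circ> \<phi>) v = face_comp t v"
        using ph2[OF v] lt2[OF v] r degen_face[of i "face_comp t v" d] by simp
    qed
    then have "hmap X c n k e m \<phi> = act X (c i d) m (canon m (face_comp t))"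
      using hmap_eq[OF ph a] by (simp add: hval_def)
    also have "\<dots> \<in> marked X m"
      using mark[of m i d t] m l(1,4) len lt by simp
    finally show ?thesis .
  qed
qed

lemma hmap_mmap:
  assumes mc: "marked_cset X"
    and mark: "\<And>m i d t. 1 \<le> m \<Longrightarrow> face_nf n ((i, d) # t) \<Longrightarrow> m + length ((i, d) # t) = n \<Longrightarrow>
      set ((i, d) # t) \<inter> bad_factors k e = {} \<Longrightarrow> act X (c i d) m (canon m (face_comp t)) \<in> marked X m"
  shows "mmap (horn n k e) X (hmap X c n k e)"
  unfolding mmap_def
proof (intro conjI allI impI)
  fix m a assume "a \<in> cells (horn n k e) m"
  then show "hmap X c n k e m a \<in> cells X m" using hmap_cells by (simp add: horn_def)
next
  fix m m' a \<chi> assume a: "a \<in> cells (horn n k e) m" and chi: "\<chi> \<in> box_hom m' m"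
  obtain i d where ph: "a \<in> box_hom m n" and ad: "adm n k e m a i d"
    using adm_of_horn[of a n k e m] a by (auto simp: horn_def)
  show "hmap X c n k e m' (act (horn n k e) a m' \<chi>) = act X (hmap X c n k e m a) m' \<chi>"
    using hmap_natural[OF ph ad chi] by (simp add: horn_def)
next
  fix m a assume a: "a \<in> marked (horn n k e) m"
  then have hc: "a \<in> horn_cells n k e m" and bm: "a \<in> box_marking n k e m" by (auto simp: horn_def)
  from bm have "1 \<le> m" and "degenerate (std_cube n) m a \<or>
       (\<exists>l. face_nf n l \<and> length l = n - m \<and> a = canon m (face_comp l) \<and> set l \<inter> bad_factors k e = {})"
    by (auto simp: box_marking_def)
  then show "hmap X c n k e m a \<in> marked X m"
    using hmap_deg[OF mc hc] hmap_face[OF hc _ _ _ _ _ mark] by blast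
qed

end


lemma horn_fill:
  assumes com: "comical X" and kn: "1 \<le> k" "k \<le> n"
    and hcells: "\<And>i d. 1 \<le> i \<Longrightarrow> i \<le> n \<Longrightarrow> (i, d) \<noteq> (k, e) \<Longrightarrow> c i d \<in> cells X (n - 1)"
    and compat: "\<And>i j d d'. 1 \<le> i \<Longrightarrow> i < j \<Longrightarrow> j \<le> n \<Longrightarrow> (i, d) \<noteq> (k, e) \<Longrightarrow> (j, d') \<noteq> (k, e) \<Longrightarrow>
        fc X (n - 1) (c i d) (j - 1) d' = fc X (n - 1) (c j d') i d"
    and mark: "\<And>m i d t. 1 \<le> m \<Longrightarrow> face_nf n ((i, d) # t) \<Longrightarrow> m + length ((i, d) # t) = n \<Longrightarrow>
      set ((i, d) # t) \<inter> bad_factors k e = {} \<Longrightarrow> act X (c i d) m (canon m (face_comp t)) \<in> marked X m"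
  shows "\<exists>u. u \<in> marked X n \<and> (\<forall>i d. 1 \<le> i \<longrightarrow> i \<le> n \<longrightarrow> (i, d) \<noteq> (k, e) \<longrightarrow> fc X n u i d = c i d)"
proof -
  have mc: "marked_cset X" using com by (simp add: comical_def)
  have cs: "cubical_set X" using mc by (simp add: marked_cset_def)
  have "rlp (horn n k e) (box_ke n k e) X" using com kn by (simp add: comical_def)
  moreover have "mmap (horn n k e) X (hmap X c n k e)"
    by (rule hmap_mmap[OF cs hcells compat mc mark])
  ultimately obtain G where G: "mmap (box_ke n k e) X G"
    and GF: "\<And>m a. a \<in> horn_cells n k e m \<Longrightarrow> G m a = hmap X c n k e m a"
    unfolding rlp_def by (auto simp: horn_def)
  let ?u = "G n (canon n id)"
  have idh: "canon n id \<in> box_hom n n" by (rule id_hom)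
  have "canon n id \<in> box_marking n k e n"
    unfolding box_marking_def using idh kn
    by (auto intro!: exI[of _ "[]"] simp: face_nf_def face_comp_Nil)
  then have um: "?u \<in> marked X n" using G by (auto simp: mmap_def box_ke_def std_cube_def)
  have faces: "fc X n ?u i d = c i d" if r: "1 \<le> i" "i \<le> n" "(i, d) \<noteq> (k, e)" for i d
  proof -
    let ?f = "canon (n - 1) (face_fun i d)"
    have fh: "?f \<in> box_hom (n - 1) n" using face_hom'[OF r(1,2)] .
    have "fc X n ?u i d = G (n - 1) (act (box_ke n k e) (canon n id) (n - 1) ?f)"
      using G idh fh unfolding mmap_def fc_def by (auto simp: box_ke_def std_cube_def)
    also have "act (box_ke n k e) (canon n id) (n - 1) ?f = ?f"
      using r by (auto simp: box_ke_def std_cube_def canon_def fun_eq_iff face_len_any)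
    finally have e1: "fc X n ?u i d = G (n - 1) ?f" .
    have ad: "adm n k e (n - 1) ?f i d"
      using r by (auto simp: adm_def canon_def face_nth)
    have "G (n - 1) ?f = hmap X c n k e (n - 1) ?f"
      using GF horn_of_adm[OF fh ad] by blast
    also have "\<dots> = hval X c (n - 1) ?f i d" by (rule hmap_eq[OF cs hcells compat fh ad])
    also have "\<dots> = act X (c i d) (n - 1) (canon (n - 1) id)"
      unfolding hval_def
      by (rule arg_cong[where f = "act X (c i d) (n - 1)"], rule canon_eqI)
         (use r in \<open>auto simp: canon_def degen_face\<close>)
    also have "\<dots> = c i d" using act_id[OF cs hcells[OF r]] .
    finally show ?thesis using e1 by simp
  qed
  show ?thesis using um faces by blast
qed


lemma box_mark:
  assumes com: "comical X" and kn: "2 \<le> n" "1 \<le> k" "k \<le> n" and u: "u \<in> cells X n"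
    and faces: "\<And>i d. 1 \<le> i \<Longrightarrow> i \<le> n \<Longrightarrow> (i, d) \<noteq> (k, e) \<Longrightarrow> fc X n u i d \<in> marked X (n - 1)"
    and mark: "\<And>m l. 1 \<le> m \<Longrightarrow> face_nf n l \<Longrightarrow> m + length l = n \<Longrightarrow> set l \<inter> bad_factors k e = {} \<Longrightarrow>
      act X u m (canon m (face_comp l)) \<in> marked X m"
  shows "fc X n u k e \<in> marked X (n - 1)"
proof -
  have mc: "marked_cset X" using com by (simp add: comical_def)
  have cs: "cubical_set X" using mc by (simp add: marked_cset_def)
  let ?F = "\<lambda>m \<phi>. act X u m \<phi>"
  have mm: "mmap (box_ke' n k e) X ?F"
    unfolding mmap_def
  proof (intro conjI allI impI)
    fix m a assume "a \<in> cells (box_ke' n k e) m"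
    then show "act X u m a \<in> cells X m" using act_cell[OF cs u] by (simp add: box_ke'_def std_cube_def)
  next
    fix m m' a \<chi> assume a: "a \<in> cells (box_ke' n k e) m" and chi: "\<chi> \<in> box_hom m' m"
    have ah: "a \<in> box_hom m n" using a by (simp add: box_ke'_def std_cube_def)
    show "act X u m' (act (box_ke' n k e) a m' \<chi>) = act X (act X u m a) m' \<chi>"
      using act_act[OF cs u ah chi] by (simp add: box_ke'_def std_cube_def)
  next
    fix m a assume "a \<in> marked (box_ke' n k e) m"
    then have "a \<in> box_marking n k e m \<or> (m = n - 1 \<and> (\<exists>i d. a = canon (n - 1) (face_fun i d) \<and> 1 \<le> i \<and> i \<le> n \<and> (i, d) \<noteq> (k, e)))"
      by (auto simp: box_ke'_def std_cube_def split: if_splits)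
    then show "act X u m a \<in> marked X m"
    proof (elim disjE conjE exE)
      fix i d assume "m = n - 1" "a = canon (n - 1) (face_fun i d)" "1 \<le> i" "i \<le> n" "(i, d) \<noteq> (k, e)"
      then show ?thesis using faces by (simp add: fc_def)
    next
      assume bm: "a \<in> box_marking n k e m"
      then have ah: "a \<in> box_hom m n" and m1: "1 \<le> m" by (auto simp: box_marking_def)
      from bm have "degenerate (std_cube n) m a \<or>
         (\<exists>l. face_nf n l \<and> length l = n - m \<and> a = canon m (face_comp l) \<and> set l \<inter> bad_factors k e = {})"
        by (auto simp: box_marking_def)
      then show ?thesis
      proof (elim disjE exE conjE)
        fix l assume l: "face_nf n l" "length l = n - m" "a = canon m (face_comp l)" "set l \<inter> bad_factors k e = {}"
        obtain v0 :: "bool list" where v0: "length v0 = m" using ex_len by blast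
        have len: "m + length l = n" using box_hom_len[OF ah v0] l(3) v0 by (simp add: canon_def face_comp_len)
        show ?thesis using mark[OF m1 l(1) len l(4)] l(3) by simp
      next
        assume dg: "degenerate (std_cube n) m a"
        have "degenerate X m (act X u m a)"
          using dg unfolding degenerate_def
        proof (elim disjE exE conjE)
          fix m' y i'
          assume m: "m = Suc m'" and y: "y \<in> cells (std_cube n) m'" and i': "1 \<le> i'" "i' \<le> Suc m'"
            and ph': "a = act (std_cube n) y m (canon m (degen_fun i'))"
          have yh: "y \<in> box_hom m' n" using y by (simp add: std_cube_def)
          have dh: "canon m (degen_fun i') \<in> box_hom m m'" using degen_hom[of i' m'] i' m by simp
          have "act X u m a = act X (act X u m' y) m (canon m (degen_fun i'))"
            using act_act[OF cs u yh dh] ph' by (simp add: std_cube_def)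
          moreover have "act X u m' y \<in> cells X m'" using act_cell[OF cs u yh] .
          ultimately show "(\<exists>m'' y i. m = Suc m'' \<and> y \<in> cells X m'' \<and> 1 \<le> i \<and> i \<le> Suc m'' \<and>
              act X u m a = act X y m (canon m (degen_fun i))) \<or>
            (\<exists>m'' y i e. m = Suc (Suc m'') \<and> y \<in> cells X (Suc m'') \<and> 1 \<le> i \<and> i \<le> Suc m'' \<and>
              act X u m a = act X y m (canon m (conn_fun i e)))"
            using m i' by blast
        next
          fix m' y i' e'
          assume m: "m = Suc (Suc m')" and y: "y \<in> cells (std_cube n) (Suc m')" and i': "1 \<le> i'" "i' \<le> Suc m'"
            and ph': "a = act (std_cube n) y m (canon m (conn_fun i' e'))"
          have yh: "y \<in> box_hom (Suc m') n" using y by (simp add: std_cube_def)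
          have dh: "canon m (conn_fun i' e') \<in> box_hom m (Suc m')" using conn_hom[of i' m' e'] i' m by simp
          have "act X u m a = act X (act X u (Suc m') y) m (canon m (conn_fun i' e'))"
            using act_act[OF cs u yh dh] ph' by (simp add: std_cube_def)
          moreover have "act X u (Suc m') y \<in> cells X (Suc m')" using act_cell[OF cs u yh] .
          ultimately show "(\<exists>m'' y i. m = Suc m'' \<and> y \<in> cells X m'' \<and> 1 \<le> i \<and> i \<le> Suc m'' \<and>
              act X u m a = act X y m (canon m (degen_fun i))) \<or>
            (\<exists>m'' y i e. m = Suc (Suc m'') \<and> y \<in> cells X (Suc m'') \<and> 1 \<le> i \<and> i \<le> Suc m'' \<and>
              act X u m a = act X y m (canon m (conn_fun i e)))"
            using m i' by blast
        qed
        then show ?thesis using mc act_cell[OF cs u ah] by (auto simp: marked_cset_def)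
      qed
    qed
  qed
  have "rlp (box_ke' n k e) (box_ke'' n k e) X" using com kn by (simp add: comical_def)
  then obtain G where G: "mmap (box_ke'' n k e) X G"
    and GF: "\<And>m a. a \<in> box_hom m n \<Longrightarrow> G m a = act X u m a"
    using mm unfolding rlp_def by (auto simp: box_ke'_def std_cube_def)
  let ?f = "canon (n - 1) (face_fun k e)"
  have fh: "?f \<in> box_hom (n - 1) n" using face_hom'[OF kn(2,3)] .
  have "?f \<in> marked (box_ke'' n k e) (n - 1)" using fh by (simp add: box_ke''_def std_cube_def)
  then have "G (n - 1) ?f \<in> marked X (n - 1)" using G by (simp add: mmap_def)
  then show ?thesis using GF[OF fh] by (simp add: fc_def)
qed


lemma face_nf_len: "face_nf n l \<Longrightarrow> length l \<le> n"
  by (simp add: face_nf_def)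

lemma horn3:
  assumes com: "comical X" and kn: "1 \<le> k" "k \<le> 3"
    and hcells: "\<And>i d. 1 \<le> i \<Longrightarrow> i \<le> 3 \<Longrightarrow> (i, d) \<noteq> (k, e) \<Longrightarrow> c i d \<in> cells X 2"
    and compat: "\<And>i j d d'. 1 \<le> i \<Longrightarrow> i < j \<Longrightarrow> j \<le> 3 \<Longrightarrow> (i, d) \<noteq> (k, e) \<Longrightarrow> (j, d') \<noteq> (k, e) \<Longrightarrow>
        fc X 2 (c i d) (j - 1) d' = fc X 2 (c j d') i d"
    and M2: "\<And>i d. 1 \<le> i \<Longrightarrow> i \<le> 3 \<Longrightarrow> (i, d) \<notin> bad_factors k e \<Longrightarrow> c i d \<in> marked X 2"
    and M1: "\<And>i j d d'. 1 \<le> j \<Longrightarrow> j < i \<Longrightarrow> i \<le> 3 \<Longrightarrow> (i, d) \<notin> bad_factors k e \<Longrightarrow> (j, d') \<notin> bad_factors k e \<Longrightarrow>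
        fc X 2 (c i d) j d' \<in> marked X 1"
  shows "\<exists>u. u \<in> marked X 3 \<and> (\<forall>i d. 1 \<le> i \<longrightarrow> i \<le> 3 \<longrightarrow> (i, d) \<noteq> (k, e) \<longrightarrow> fc X 3 u i d = c i d)"
proof (rule horn_fill[OF com kn])
  have cs: "cubical_set X" using com by (simp add: comical_def marked_cset_def)
  show "\<And>i d. 1 \<le> i \<Longrightarrow> i \<le> 3 \<Longrightarrow> (i, d) \<noteq> (k, e) \<Longrightarrow> c i d \<in> cells X (3 - 1)"
    using hcells by simp
  show "\<And>i j d d'. 1 \<le> i \<Longrightarrow> i < j \<Longrightarrow> j \<le> 3 \<Longrightarrow> (i, d) \<noteq> (k, e) \<Longrightarrow> (j, d') \<noteq> (k, e) \<Longrightarrow>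
        fc X (3 - 1) (c i d) (j - 1) d' = fc X (3 - 1) (c j d') i d"
    using compat by simp
  fix m i d t
  assume m: "1 \<le> m" and nf: "face_nf 3 ((i, d) # t)" and len: "m + length ((i, d) # t) = 3"
    and nb: "set ((i, d) # t) \<inter> bad_factors k e = {}"
  have r: "1 \<le> i" "i \<le> 3" using nf by (auto simp: face_nf_def)
  have nbi: "(i, d) \<notin> bad_factors k e" using nb by auto
  have neq: "(i, d) \<noteq> (k, e)"
  proof
    assume "(i, d) = (k, e)" with nbi bad_self[of k e] show False by simp
  qed
  consider "t = []" | j d' where "t = [(j, d')]" using len m
    by (cases t; cases "tl t") (auto)
  then show "act X (c i d) m (canon m (face_comp t)) \<in> marked X m"
  proof cases
    case 1
    then have "m = 2" using len by simp
    then show ?thesis using 1 act_id[OF cs hcells[OF r neq]] M2[OF r nbi] by (simp add: face_comp_Nil)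
  next
    case 2
    then have m1: "m = 1" using len by simp
    have j: "1 \<le> j" "j < i" using nf 2 by (auto simp: face_nf_def)
    have nbj: "(j, d') \<notin> bad_factors k e" using nb 2 by auto
    have "canon 1 (face_comp t) = canon 1 (face_fun j d')"
      using 2 by (simp add: face_comp_Cons face_comp_Nil)
    then show ?thesis using m1 M1[OF j r(2) nbi nbj] by (simp add: fc_def)
  qed
qed

lemma box3:
  assumes com: "comical X" and kn: "1 \<le> k" "k \<le> 3" and u: "u \<in> marked X 3"
    and faces: "\<And>i d. 1 \<le> i \<Longrightarrow> i \<le> 3 \<Longrightarrow> (i, d) \<noteq> (k, e) \<Longrightarrow> fc X 3 u i d \<in> marked X 2"
    and M1: "\<And>i j d d'. 1 \<le> j \<Longrightarrow> j < i \<Longrightarrow> i \<le> 3 \<Longrightarrow> (i, d) \<notin> bad_factors k e \<Longrightarrow> (j, d') \<notin> bad_factors k e \<Longrightarrow>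
        fc X 2 (fc X 3 u i d) j d' \<in> marked X 1"
  shows "fc X 3 u k e \<in> marked X 2"
proof -
  have mc: "marked_cset X" using com by (simp add: comical_def)
  have cs: "cubical_set X" using mc by (simp add: marked_cset_def)
  have uc: "u \<in> cells X 3" using u mc by (auto simp: marked_cset_def)
  have "fc X 3 u k e \<in> marked X (3 - 1)"
  proof (rule box_mark[OF com _ kn uc])
    show "2 \<le> (3::nat)" by simp
    show "\<And>i d. 1 \<le> i \<Longrightarrow> i \<le> 3 \<Longrightarrow> (i, d) \<noteq> (k, e) \<Longrightarrow> fc X 3 u i d \<in> marked X (3 - 1)"
      using faces by simp
    fix m l assume m: "1 \<le> m" and nf: "face_nf 3 l" and len: "m + length l = 3"
      and nb: "set l \<inter> bad_factors k e = {}"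
    consider "l = []" | i d where "l = [(i, d)]" | i d j d' where "l = [(i, d), (j, d')]"
      using len m by (cases l; cases "tl l"; cases "tl (tl l)") auto
    then show "act X u m (canon m (face_comp l)) \<in> marked X m"
    proof cases
      case 1
      then show ?thesis using len act_id[OF cs uc] u by (simp add: face_comp_Nil)
    next
      case 2
      have r: "1 \<le> i" "i \<le> 3" using nf 2 by (auto simp: face_nf_def)
      have neq: "(i, d) \<noteq> (k, e)"
      proof
        assume "(i, d) = (k, e)" with nb 2 bad_self[of k e] show False by auto
      qed
      have "canon 2 (face_comp l) = canon 2 (face_fun i d)" using 2 by (simp add: face_comp_Cons face_comp_Nil)
      then show ?thesis using 2 len faces[OF r neq] by (simp add: fc_def)
    next
      case 3
      have r: "1 \<le> j" "j < i" "i \<le> 3" using nf 3 by (auto simp: face_nf_def)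
      have nbs: "(i, d) \<notin> bad_factors k e" "(j, d') \<notin> bad_factors k e" using nb 3 by auto
      have m1: "m = 1" using len 3 by simp
      have h2: "canon 2 (face_fun i d) \<in> box_hom 2 3" using face_hom[of i 2 d] r by simp
      have h1: "canon 1 (face_fun j d') \<in> box_hom 1 2" using face_hom[of j 1 d'] r by (simp add: numeral_2_eq_2)
      have "canon 1 (face_comp l) = canon 1 (canon 2 (face_fun i d) \<circ> canon 1 (face_fun j d'))"
        using 3 by (intro canon_eqI) (simp add: face_comp_Cons face_comp_Nil canon_def face_len_any)
      then have "act X u m (canon m (face_comp l)) = fc X 2 (fc X 3 u i d) j d'"
        using m1 act_act[OF cs uc h2 h1] by (simp add: fc_def)
      then show ?thesis using M1[OF r nbs] m1 by simp
    qed
  qed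
  then show ?thesis by simp
qed

lemma horn2:
  assumes com: "comical X" and kn: "1 \<le> k" "k \<le> 2"
    and hcells: "\<And>i d. 1 \<le> i \<Longrightarrow> i \<le> 2 \<Longrightarrow> (i, d) \<noteq> (k, e) \<Longrightarrow> c i d \<in> cells X 1"
    and compat: "\<And>d d'. (1, d) \<noteq> (k, e) \<Longrightarrow> (2, d') \<noteq> (k, e) \<Longrightarrow>
        fc X 1 (c 1 d) 1 d' = fc X 1 (c 2 d') 1 d"
    and M: "\<And>i d. 1 \<le> i \<Longrightarrow> i \<le> 2 \<Longrightarrow> (i, d) \<notin> bad_factors k e \<Longrightarrow> c i d \<in> marked X 1"
  shows "\<exists>u. u \<in> marked X 2 \<and> (\<forall>i d. 1 \<le> i \<longrightarrow> i \<le> 2 \<longrightarrow> (i, d) \<noteq> (k, e) \<longrightarrow> fc X 2 u i d = c i d)"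
proof (rule horn_fill[OF com kn])
  have cs: "cubical_set X" using com by (simp add: comical_def marked_cset_def)
  show "\<And>i d. 1 \<le> i \<Longrightarrow> i \<le> 2 \<Longrightarrow> (i, d) \<noteq> (k, e) \<Longrightarrow> c i d \<in> cells X (2 - 1)"
    using hcells by simp
  show "fc X (2 - 1) (c i d) (j - 1) d' = fc X (2 - 1) (c j d') i d"
    if "1 \<le> i" "i < j" "j \<le> 2" "(i, d) \<noteq> (k, e)" "(j, d') \<noteq> (k, e)" for i j d d'
  proof -
    have ij: "i = 1" "j = 2" using that by auto
    show ?thesis using compat[of d d'] that ij by simp
  qed
  fix m i d t
  assume m: "1 \<le> m" and nf: "face_nf 2 ((i, d) # t)" and len: "m + length ((i, d) # t) = 2"
    and nb: "set ((i, d) # t) \<inter> bad_factors k e = {}"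
  have r: "1 \<le> i" "i \<le> 2" using nf by (auto simp: face_nf_def)
  have nbi: "(i, d) \<notin> bad_factors k e" using nb by auto
  have neq: "(i, d) \<noteq> (k, e)"
  proof
    assume "(i, d) = (k, e)" with nbi bad_self[of k e] show False by simp
  qed
  have m1: "m = 1" using len m by auto
  then have "t = []" using len by simp
  then show "act X (c i d) m (canon m (face_comp t)) \<in> marked X m"
    using act_id[OF cs hcells[OF r neq]] M[OF r nbi] m1 by (simp add: face_comp_Nil)
qed


definition sq1 :: "('c, 'z) mcset_scheme \<Rightarrow> 'c \<Rightarrow> 'c" where
  "sq1 X f = act X f 2 (canon 2 (degen_fun 1))"
definition sq2 :: "('c, 'z) mcset_scheme \<Rightarrow> 'c \<Rightarrow> 'c" where
  "sq2 X f = act X f 2 (canon 2 (degen_fun 2))"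
definition gmx :: "('c, 'z) mcset_scheme \<Rightarrow> 'c \<Rightarrow> 'c" where
  "gmx X f = act X f 2 (canon 2 (conn_fun 1 True))"

lemma len1: "length v = Suc 0 \<longleftrightarrow> (\<exists>b. v = [b])"
  by (cases v) auto

lemma hom11: "canon 1 (face_fun 1 d) \<in> box_hom 1 2" using face_hom[of 1 1 d] by (simp add: numeral_2_eq_2)
lemma hom12: "canon 1 (face_fun 2 d) \<in> box_hom 1 2" using face_hom[of 2 1 d] by (simp add: numeral_2_eq_2)
lemma hom01: "canon 0 (face_fun 1 d) \<in> box_hom 0 1" using face_hom[of 1 0 d] by simp
lemma homd1: "canon 1 (degen_fun 1) \<in> box_hom 1 0" using degen_hom[of 1 0] by simp
lemma homs1: "canon 2 (degen_fun 1) \<in> box_hom 2 1" using degen_hom[of 1 1] by (simp add: numeral_2_eq_2)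
lemma homs2: "canon 2 (degen_fun 2) \<in> box_hom 2 1" using degen_hom[of 2 1] by (simp add: numeral_2_eq_2)
lemma homg: "canon 2 (conn_fun 1 e) \<in> box_hom 2 1" using conn_hom[of 1 0 e] by (simp add: numeral_2_eq_2)

context
  fixes X :: "('c, 'z) mcset_scheme"
  assumes cs: "cubical_set X"
begin

lemma vtx: "s \<in> cells X 2 \<Longrightarrow> fc X 1 (fc X 2 s 1 d) 1 d' = fc X 1 (fc X 2 s 2 d') 1 d"
  using fc_fc[OF cs, of s 0 1 2 d d'] by (simp add: numeral_2_eq_2)

lemma fc_cell: "s \<in> cells X (Suc m) \<Longrightarrow> 1 \<le> i \<Longrightarrow> i \<le> Suc m \<Longrightarrow> fc X (Suc m) s i d \<in> cells X m"
  unfolding fc_def using act_cell[OF cs _ face_hom[of i m d]] by simp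

lemma fc2_cell: "s \<in> cells X 2 \<Longrightarrow> 1 \<le> i \<Longrightarrow> i \<le> 2 \<Longrightarrow> fc X 2 s i d \<in> cells X 1"
  using fc_cell[of s 1 i d] by (simp add: numeral_2_eq_2)

lemma fc1_cell: "s \<in> cells X 1 \<Longrightarrow> fc X 1 s 1 d \<in> cells X 0"
  using fc_cell[of s 0 1 d] by simp

lemma sig1_cell: "z \<in> cells X 0 \<Longrightarrow> sig1 X z \<in> cells X 1"
  unfolding sig1_def using act_cell[OF cs _ homd1] by simp

lemma sig1_vtx: "z \<in> cells X 0 \<Longrightarrow> fc X 1 (sig1 X z) 1 d = z"
proof -
  assume z: "z \<in> cells X 0"
  have "fc X 1 (sig1 X z) 1 d = act X z 0 (canon 0 (canon 1 (degen_fun 1) \<circ> canon 0 (face_fun 1 d)))"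
    unfolding fc_def sig1_def using act_act[OF cs z homd1 hom01] by simp
  also have "canon 0 (canon 1 (degen_fun 1) \<circ> canon 0 (face_fun 1 d)) = canon 0 id"
    by (rule canon_eqI) (simp add: canon_def face_fun_def degen_fun_def)
  finally show ?thesis using act_id[OF cs z] by simp
qed

lemma sig1_as: "f \<in> cells X 1 \<Longrightarrow> sig1 X (fc X 1 f 1 d) = act X f 1 (canon 1 (canon 0 (face_fun 1 d) \<circ> canon 1 (degen_fun 1)))"
  unfolding fc_def sig1_def using act_act[OF cs _ hom01 homd1] by simp

lemma face_as: "f \<in> cells X k \<Longrightarrow> A \<in> box_hom 2 k \<Longrightarrow> (i = 1 \<or> i = 2) \<Longrightarrow>
   fc X 2 (act X f 2 A) i d = act X f 1 (canon 1 (A \<circ> canon 1 (face_fun i d)))"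
  unfolding fc_def using act_act[OF cs _ _ hom11] act_act[OF cs _ _ hom12] by auto

lemma sq1_faces:
  assumes f: "f \<in> cells X 1"
  shows "fc X 2 (sq1 X f) 1 d = f" "fc X 2 (sq1 X f) 2 d = sig1 X (fc X 1 f 1 d)"
proof -
  have "canon 1 (canon 2 (degen_fun 1) \<circ> canon 1 (face_fun 1 d)) = canon 1 id"
    by (rule canon_eqI) (auto simp: len1 canon_def face_fun_def degen_fun_def)
  then show "fc X 2 (sq1 X f) 1 d = f" unfolding sq1_def using face_as[OF f homs1, of 1 d] act_id[OF cs f] by simp
  have "canon 1 (canon 2 (degen_fun 1) \<circ> canon 1 (face_fun 2 d)) = canon 1 (canon 0 (face_fun 1 d) \<circ> canon 1 (degen_fun 1))"
    by (rule canon_eqI) (auto simp: len1 canon_def face_fun_def degen_fun_def)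
  then show "fc X 2 (sq1 X f) 2 d = sig1 X (fc X 1 f 1 d)" unfolding sq1_def using face_as[OF f homs1, of 2 d] sig1_as[OF f] by simp
qed

lemma sq2_faces:
  assumes f: "f \<in> cells X 1"
  shows "fc X 2 (sq2 X f) 2 d = f" "fc X 2 (sq2 X f) 1 d = sig1 X (fc X 1 f 1 d)"
proof -
  have "canon 1 (canon 2 (degen_fun 2) \<circ> canon 1 (face_fun 2 d)) = canon 1 id"
    by (rule canon_eqI) (auto simp: len1 canon_def face_fun_def degen_fun_def)
  then show "fc X 2 (sq2 X f) 2 d = f" unfolding sq2_def using face_as[OF f homs2, of 2 d] act_id[OF cs f] by simp
  have "canon 1 (canon 2 (degen_fun 2) \<circ> canon 1 (face_fun 1 d)) = canon 1 (canon 0 (face_fun 1 d) \<circ> canon 1 (degen_fun 1))"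
    by (rule canon_eqI) (auto simp: len1 canon_def face_fun_def degen_fun_def)
  then show "fc X 2 (sq2 X f) 1 d = sig1 X (fc X 1 f 1 d)" unfolding sq2_def using face_as[OF f homs2, of 1 d] sig1_as[OF f] by simp
qed

lemma gmx_faces:
  assumes f: "f \<in> cells X 1"
  shows "fc X 2 (gmx X f) 1 False = f" "fc X 2 (gmx X f) 2 False = f"
    "fc X 2 (gmx X f) 1 True = sig1 X (fc X 1 f 1 True)" "fc X 2 (gmx X f) 2 True = sig1 X (fc X 1 f 1 True)"
proof -
  have "canon 1 (canon 2 (conn_fun 1 True) \<circ> canon 1 (face_fun 1 False)) = canon 1 id"
    by (rule canon_eqI) (auto simp: len1 canon_def face_fun_def conn_fun_def)
  then show "fc X 2 (gmx X f) 1 False = f" unfolding gmx_def using face_as[OF f homg[of True], of 1 False] act_id[OF cs f] by simp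
  have "canon 1 (canon 2 (conn_fun 1 True) \<circ> canon 1 (face_fun 2 False)) = canon 1 id"
    by (rule canon_eqI) (auto simp: len1 canon_def face_fun_def conn_fun_def)
  then show "fc X 2 (gmx X f) 2 False = f" unfolding gmx_def using face_as[OF f homg[of True], of 2 False] act_id[OF cs f] by simp
  have "canon 1 (canon 2 (conn_fun 1 True) \<circ> canon 1 (face_fun 1 True)) = canon 1 (canon 0 (face_fun 1 True) \<circ> canon 1 (degen_fun 1))"
    by (rule canon_eqI) (auto simp: len1 canon_def face_fun_def conn_fun_def degen_fun_def)
  then show "fc X 2 (gmx X f) 1 True = sig1 X (fc X 1 f 1 True)" unfolding gmx_def using face_as[OF f homg[of True], of 1 True] sig1_as[OF f] by simp
  have "canon 1 (canon 2 (conn_fun 1 True) \<circ> canon 1 (face_fun 2 True)) = canon 1 (canon 0 (face_fun 1 True) \<circ> canon 1 (degen_fun 1))"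
    by (rule canon_eqI) (auto simp: len1 canon_def face_fun_def conn_fun_def degen_fun_def)
  then show "fc X 2 (gmx X f) 2 True = sig1 X (fc X 1 f 1 True)" unfolding gmx_def using face_as[OF f homg[of True], of 2 True] sig1_as[OF f] by simp
qed

lemma sq1_cell: "f \<in> cells X 1 \<Longrightarrow> sq1 X f \<in> cells X 2"
  unfolding sq1_def using act_cell[OF cs _ homs1] by simp
lemma sq2_cell: "f \<in> cells X 1 \<Longrightarrow> sq2 X f \<in> cells X 2"
  unfolding sq2_def using act_cell[OF cs _ homs2] by simp
lemma gmx_cell: "f \<in> cells X 1 \<Longrightarrow> gmx X f \<in> cells X 2"
  unfolding gmx_def using act_cell[OF cs _ homg] by simp

end

lemma deg_marked:
  assumes mc: "marked_cset X" and f: "f \<in> cells X 1"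
  shows "sq1 X f \<in> marked X 2" "sq2 X f \<in> marked X 2" "gmx X f \<in> marked X 2"
proof -
  have cs: "cubical_set X" using mc by (simp add: marked_cset_def)
  have "degenerate X 2 (sq1 X f)" unfolding degenerate_def sq1_def using f
    by (intro disjI1 exI[of _ 1] exI[of _ f] exI[of _ 1]) (simp add: numeral_2_eq_2)
  then show "sq1 X f \<in> marked X 2" using mc sq1_cell[OF cs f] by (auto simp: marked_cset_def)
  have "degenerate X 2 (sq2 X f)" unfolding degenerate_def sq2_def using f
    by (intro disjI1 exI[of _ 1] exI[of _ f] exI[of _ 2]) (simp add: numeral_2_eq_2)
  then show "sq2 X f \<in> marked X 2" using mc sq2_cell[OF cs f] by (auto simp: marked_cset_def)
  have "degenerate X 2 (gmx X f)" unfolding degenerate_def gmx_def using f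
    by (intro disjI2 exI[of _ 0] exI[of _ f] exI[of _ 1] exI[of _ True]) (simp add: numeral_2_eq_2)
  then show "gmx X f \<in> marked X 2" using mc gmx_cell[OF cs f] by (auto simp: marked_cset_def)
qed


lemma notbad_neq: "(i, d) \<notin> bad_factors k e \<Longrightarrow> (i, d) \<noteq> (k, e)"
proof
  assume "(i, d) \<notin> bad_factors k e" "(i, d) = (k, e)"
  then show False using bad_self[of k e] by simp
qed

lemma cube_gen:
  assumes com: "comical X" and kn: "1 \<le> k" "k \<le> 3"
    and M2: "\<And>i d. 1 \<le> i \<Longrightarrow> i \<le> 3 \<Longrightarrow> (i, d) \<noteq> (k, e) \<Longrightarrow> c i d \<in> marked X 2"
    and compat: "\<And>i j d d'. 1 \<le> i \<Longrightarrow> i < j \<Longrightarrow> j \<le> 3 \<Longrightarrow> (i, d) \<noteq> (k, e) \<Longrightarrow> (j, d') \<noteq> (k, e) \<Longrightarrow>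
        fc X 2 (c i d) (j - 1) d' = fc X 2 (c j d') i d"
    and M1: "\<And>i j d d'. 1 \<le> j \<Longrightarrow> j < i \<Longrightarrow> i \<le> 3 \<Longrightarrow> (i, d) \<notin> bad_factors k e \<Longrightarrow> (j, d') \<notin> bad_factors k e \<Longrightarrow>
        fc X 2 (c i d) j d' \<in> marked X 1"
  shows "\<exists>u. u \<in> marked X 3 \<and> (\<forall>i d. 1 \<le> i \<longrightarrow> i \<le> 3 \<longrightarrow> (i, d) \<noteq> (k, e) \<longrightarrow> fc X 3 u i d = c i d)
     \<and> fc X 3 u k e \<in> marked X 2"
proof -
  have mc: "marked_cset X" using com by (simp add: comical_def)
  have sub: "marked X 2 \<subseteq> cells X 2" using mc by (simp add: marked_cset_def)
  have hcells: "c i d \<in> cells X 2" if "1 \<le> i" "i \<le> 3" "(i, d) \<noteq> (k, e)" for i d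
    using M2[OF that] sub by (rule subsetD[rotated])
  obtain u where u: "u \<in> marked X 3" and uf: "\<And>i d. 1 \<le> i \<Longrightarrow> i \<le> 3 \<Longrightarrow> (i, d) \<noteq> (k, e) \<Longrightarrow> fc X 3 u i d = c i d"
  proof -
    have "c i d \<in> marked X 2" if "1 \<le> i" "i \<le> 3" "(i, d) \<notin> bad_factors k e" for i d
      using M2[OF that(1,2) notbad_neq[OF that(3)]] .
    from horn3[where X=X and k=k and e=e and c=c, OF com kn hcells compat this M1] obtain u where
      "u \<in> marked X 3" "\<forall>i d. 1 \<le> i \<longrightarrow> i \<le> 3 \<longrightarrow> (i, d) \<noteq> (k, e) \<longrightarrow> fc X 3 u i d = c i d" by blast
    then show ?thesis using that by simp
  qed
  have "fc X 3 u k e \<in> marked X 2"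
  proof (rule box3[where X=X and k=k and e=e and u=u, OF com kn u])
    show "fc X 3 u i d \<in> marked X 2" if "1 \<le> i" "i \<le> 3" "(i, d) \<noteq> (k, e)" for i d
      using uf[OF that] M2[OF that] by simp
    show "fc X 2 (fc X 3 u i d) j d' \<in> marked X 1"
      if "1 \<le> j" "j < i" "i \<le> 3" "(i, d) \<notin> bad_factors k e" "(j, d') \<notin> bad_factors k e" for i j d d'
    proof -
      have "fc X 3 u i d = c i d" using uf[of i d] notbad_neq[OF that(4)] that by simp
      then show ?thesis using M1[OF that] by simp
    qed
  qed
  then show ?thesis using u uf by blast
qed

lemma three: "1 \<le> i \<Longrightarrow> i \<le> 3 \<Longrightarrow> i = 1 \<or> i = 2 \<or> i = (3::nat)"
  by auto

lemma pairs3: "1 \<le> i \<Longrightarrow> i < j \<Longrightarrow> j \<le> 3 \<Longrightarrow> (i = 1 \<and> j = 2) \<or> (i = 1 \<and> j = 3) \<or> (i = 2 \<and> j = (3::nat))"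
  by auto

definition cf :: "'c \<Rightarrow> 'c \<Rightarrow> 'c \<Rightarrow> 'c \<Rightarrow> 'c \<Rightarrow> 'c \<Rightarrow> nat \<Rightarrow> bool \<Rightarrow> 'c" where
  "cf C10 C11 C20 C21 C30 C31 i d = (if i = 1 then (if d then C11 else C10) else if i = 2 then (if d then C21 else C20)
     else (if d then C31 else C30))"

lemma cf_simps: "cf C10 C11 C20 C21 C30 C31 1 False = C10" "cf C10 C11 C20 C21 C30 C31 1 True = C11"
  "cf C10 C11 C20 C21 C30 C31 2 False = C20" "cf C10 C11 C20 C21 C30 C31 2 True = C21"
  "cf C10 C11 C20 C21 C30 C31 3 False = C30" "cf C10 C11 C20 C21 C30 C31 3 True = C31"
  by (simp_all add: cf_def)

lemma cube10:
  assumes com: "comical X"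
    and mk: "C11 \<in> marked X 2" "C20 \<in> marked X 2" "C21 \<in> marked X 2" "C30 \<in> marked X 2" "C31 \<in> marked X 2"
    and c12: "fc X 2 C11 1 False = fc X 2 C20 1 True" "fc X 2 C11 1 True = fc X 2 C21 1 True"
    and c13: "fc X 2 C11 2 False = fc X 2 C30 1 True" "fc X 2 C11 2 True = fc X 2 C31 1 True"
    and c23: "fc X 2 C20 2 False = fc X 2 C30 2 False" "fc X 2 C20 2 True = fc X 2 C31 2 False"
             "fc X 2 C21 2 False = fc X 2 C30 2 True" "fc X 2 C21 2 True = fc X 2 C31 2 True"
    and e: "fc X 2 C30 2 True \<in> marked X 1" "fc X 2 C31 2 True \<in> marked X 1"
  shows "\<exists>t. t \<in> marked X 2 \<and> fc X 2 t 1 False = fc X 2 C20 1 False \<and> fc X 2 t 1 True = fc X 2 C21 1 False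
     \<and> fc X 2 t 2 False = fc X 2 C30 1 False \<and> fc X 2 t 2 True = fc X 2 C31 1 False"
proof -
  let ?c = "cf C11 C11 C20 C21 C30 C31"
  have "\<exists>u. u \<in> marked X 3 \<and> (\<forall>i d. 1 \<le> i \<longrightarrow> i \<le> 3 \<longrightarrow> (i, d) \<noteq> (1, False) \<longrightarrow> fc X 3 u i d = ?c i d)
     \<and> fc X 3 u 1 False \<in> marked X 2"
  proof (rule cube_gen[where X=X and k=1 and e=False and c="?c", OF com])
    show "?c i d \<in> marked X 2" if "1 \<le> i" "i \<le> 3" "(i, d) \<noteq> (1, False)" for i d
      using three[OF that(1,2)] that(3) mk by (cases d; elim disjE; simp add: cf_def)
    show "fc X 2 (?c i d) (j - 1) d' = fc X 2 (?c j d') i d"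
      if "1 \<le> i" "i < j" "j \<le> 3" "(i, d) \<noteq> (1, False)" "(j, d') \<noteq> (1, False)" for i j d d'
      using pairs3[OF that(1-3)] that(4,5) c12 c13 c23 by (cases d; cases d'; elim disjE conjE; simp add: cf_def)
    show "fc X 2 (?c i d) j d' \<in> marked X 1"
      if "1 \<le> j" "j < i" "i \<le> 3" "(i, d) \<notin> bad_factors 1 False" "(j, d') \<notin> bad_factors 1 False" for i j d d'
      using pairs3[OF that(1-3)] that(4,5) e by (cases d; cases d'; elim disjE conjE; simp add: cf_def bad_factors_def)
  qed auto
  then obtain u where u: "u \<in> marked X 3" and uf: "\<And>i d. 1 \<le> i \<Longrightarrow> i \<le> 3 \<Longrightarrow> (i, d) \<noteq> (1, False) \<Longrightarrow> fc X 3 u i d = ?c i d"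
    and t: "fc X 3 u 1 False \<in> marked X 2" by blast
  have mc: "marked_cset X" using com by (simp add: comical_def)
  have cs: "cubical_set X" using mc by (simp add: marked_cset_def)
  have "marked X 3 \<subseteq> cells X 3" using mc by (simp add: marked_cset_def)
  then have uc: "u \<in> cells X (Suc (Suc 1))" using u by (auto simp: numeral_3_eq_3)
  have A: "fc X 2 (fc X 3 u 1 False) 1 d = fc X 2 (fc X 3 u 2 d) 1 False" for d
    using fc_fc[OF cs uc, of 1 2 False d] by (simp add: numeral_3_eq_3 numeral_2_eq_2)
  have B: "fc X 2 (fc X 3 u 1 False) 2 d = fc X 2 (fc X 3 u 3 d) 1 False" for d
    using fc_fc[OF cs uc, of 1 3 False d] by (simp add: numeral_3_eq_3 numeral_2_eq_2)
  show ?thesis using t A B uf[of 2 True] uf[of 2 False] uf[of 3 True] uf[of 3 False]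
    by (intro exI[of _ "fc X 3 u 1 False"]) (simp add: cf_def)
qed


lemma cube20:
  assumes com: "comical X"
    and mk: "C10 \<in> marked X 2" "C11 \<in> marked X 2" "C21 \<in> marked X 2" "C30 \<in> marked X 2" "C31 \<in> marked X 2"
    and cp: "fc X 2 C10 1 True = fc X 2 C21 1 False" "fc X 2 C11 1 True = fc X 2 C21 1 True" "fc X 2 C10 2 False = fc X 2 C30 1 False" "fc X 2 C10 2 True = fc X 2 C31 1 False" "fc X 2 C11 2 False = fc X 2 C30 1 True" "fc X 2 C11 2 True = fc X 2 C31 1 True" "fc X 2 C21 2 False = fc X 2 C30 2 True" "fc X 2 C21 2 True = fc X 2 C31 2 True"
    and e: "fc X 2 C31 1 True \<in> marked X 1"
  shows "\<exists>t. t \<in> marked X 2 \<and> fc X 2 t 1 False = fc X 2 C10 1 False \<and> fc X 2 t 1 True = fc X 2 C11 1 False \<and> fc X 2 t 2 False = fc X 2 C30 2 False \<and> fc X 2 t 2 True = fc X 2 C31 2 False"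
proof -
  let ?c = "cf C10 C11 C21 C21 C30 C31"
  have "\<exists>u. u \<in> marked X 3 \<and> (\<forall>i d. 1 \<le> i \<longrightarrow> i \<le> 3 \<longrightarrow> (i, d) \<noteq> (2, False) \<longrightarrow> fc X 3 u i d = ?c i d)
     \<and> fc X 3 u 2 False \<in> marked X 2"
  proof (rule cube_gen[where X=X and k=2 and e=False and c="?c", OF com])
    show "?c i d \<in> marked X 2" if "1 \<le> i" "i \<le> 3" "(i, d) \<noteq> (2, False)" for i d
      using three[OF that(1,2)] that(3) mk by (cases d; elim disjE; simp add: cf_def)
    show "fc X 2 (?c i d) (j - 1) d' = fc X 2 (?c j d') i d"
      if "1 \<le> i" "i < j" "j \<le> 3" "(i, d) \<noteq> (2, False)" "(j, d') \<noteq> (2, False)" for i j d d'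
      using pairs3[OF that(1-3)] that(4,5) cp by (cases d; cases d'; elim disjE conjE; simp add: cf_def)
    show "fc X 2 (?c i d) j d' \<in> marked X 1"
      if "1 \<le> j" "j < i" "i \<le> 3" "(i, d) \<notin> bad_factors 2 False" "(j, d') \<notin> bad_factors 2 False" for i j d d'
      using pairs3[OF that(1-3)] that(4,5) e by (cases d; cases d'; elim disjE conjE; simp add: cf_def bad_factors_def)
  qed auto
  then obtain u where u: "u \<in> marked X 3" and uf: "\<And>i d. 1 \<le> i \<Longrightarrow> i \<le> 3 \<Longrightarrow> (i, d) \<noteq> (2, False) \<Longrightarrow> fc X 3 u i d = ?c i d"
    and t: "fc X 3 u 2 False \<in> marked X 2" by blast
  have mc: "marked_cset X" using com by (simp add: comical_def)
  have cs: "cubical_set X" using mc by (simp add: marked_cset_def)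
  have "marked X 3 \<subseteq> cells X 3" using mc by (simp add: marked_cset_def)
  then have uc: "u \<in> cells X (Suc (Suc 1))" using u by (auto simp: numeral_3_eq_3)
  have A: "fc X 2 (fc X 3 u 2 False) 1 d = fc X 2 (fc X 3 u 1 d) 1 False" for d
    using fc_fc[OF cs uc, of 1 2 d False] by (simp add: numeral_3_eq_3 numeral_2_eq_2)
  have B: "fc X 2 (fc X 3 u 2 False) 2 d = fc X 2 (fc X 3 u 3 d) 2 False" for d
    using fc_fc[OF cs uc, of 2 3 False d] by (simp add: numeral_3_eq_3 numeral_2_eq_2)
  show ?thesis using t A B uf[of 1 True] uf[of 1 False] uf[of 3 True] uf[of 3 False]
    by (intro exI[of _ "fc X 3 u 2 False"]) (simp add: cf_def)
qed

lemma cube11: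
  assumes com: "comical X"
    and mk: "C10 \<in> marked X 2" "C20 \<in> marked X 2" "C21 \<in> marked X 2" "C30 \<in> marked X 2" "C31 \<in> marked X 2"
    and cp: "fc X 2 C10 1 False = fc X 2 C20 1 False" "fc X 2 C10 1 True = fc X 2 C21 1 False" "fc X 2 C10 2 False = fc X 2 C30 1 False" "fc X 2 C10 2 True = fc X 2 C31 1 False" "fc X 2 C20 2 False = fc X 2 C30 2 False" "fc X 2 C20 2 True = fc X 2 C31 2 False" "fc X 2 C21 2 False = fc X 2 C30 2 True" "fc X 2 C21 2 True = fc X 2 C31 2 True"
    and e: "fc X 2 C30 2 False \<in> marked X 1" "fc X 2 C31 2 False \<in> marked X 1"
  shows "\<exists>t. t \<in> marked X 2 \<and> fc X 2 t 1 False = fc X 2 C20 1 True \<and> fc X 2 t 1 True = fc X 2 C21 1 True \<and> fc X 2 t 2 False = fc X 2 C30 1 True \<and> fc X 2 t 2 True = fc X 2 C31 1 True"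
proof -
  let ?c = "cf C10 C10 C20 C21 C30 C31"
  have "\<exists>u. u \<in> marked X 3 \<and> (\<forall>i d. 1 \<le> i \<longrightarrow> i \<le> 3 \<longrightarrow> (i, d) \<noteq> (1, True) \<longrightarrow> fc X 3 u i d = ?c i d)
     \<and> fc X 3 u 1 True \<in> marked X 2"
  proof (rule cube_gen[where X=X and k=1 and e=True and c="?c", OF com])
    show "?c i d \<in> marked X 2" if "1 \<le> i" "i \<le> 3" "(i, d) \<noteq> (1, True)" for i d
      using three[OF that(1,2)] that(3) mk by (cases d; elim disjE; simp add: cf_def)
    show "fc X 2 (?c i d) (j - 1) d' = fc X 2 (?c j d') i d"
      if "1 \<le> i" "i < j" "j \<le> 3" "(i, d) \<noteq> (1, True)" "(j, d') \<noteq> (1, True)" for i j d d'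
      using pairs3[OF that(1-3)] that(4,5) cp by (cases d; cases d'; elim disjE conjE; simp add: cf_def)
    show "fc X 2 (?c i d) j d' \<in> marked X 1"
      if "1 \<le> j" "j < i" "i \<le> 3" "(i, d) \<notin> bad_factors 1 True" "(j, d') \<notin> bad_factors 1 True" for i j d d'
      using pairs3[OF that(1-3)] that(4,5) e by (cases d; cases d'; elim disjE conjE; simp add: cf_def bad_factors_def)
  qed auto
  then obtain u where u: "u \<in> marked X 3" and uf: "\<And>i d. 1 \<le> i \<Longrightarrow> i \<le> 3 \<Longrightarrow> (i, d) \<noteq> (1, True) \<Longrightarrow> fc X 3 u i d = ?c i d"
    and t: "fc X 3 u 1 True \<in> marked X 2" by blast
  have mc: "marked_cset X" using com by (simp add: comical_def)
  have cs: "cubical_set X" using mc by (simp add: marked_cset_def)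
  have "marked X 3 \<subseteq> cells X 3" using mc by (simp add: marked_cset_def)
  then have uc: "u \<in> cells X (Suc (Suc 1))" using u by (auto simp: numeral_3_eq_3)
  have A: "fc X 2 (fc X 3 u 1 True) 1 d = fc X 2 (fc X 3 u 2 d) 1 True" for d
    using fc_fc[OF cs uc, of 1 2 True d] by (simp add: numeral_3_eq_3 numeral_2_eq_2)
  have B: "fc X 2 (fc X 3 u 1 True) 2 d = fc X 2 (fc X 3 u 3 d) 1 True" for d
    using fc_fc[OF cs uc, of 1 3 True d] by (simp add: numeral_3_eq_3 numeral_2_eq_2)
  show ?thesis using t A B uf[of 2 True] uf[of 2 False] uf[of 3 True] uf[of 3 False]
    by (intro exI[of _ "fc X 3 u 1 True"]) (simp add: cf_def)
qed

lemma cube21: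
  assumes com: "comical X"
    and mk: "C10 \<in> marked X 2" "C11 \<in> marked X 2" "C20 \<in> marked X 2" "C30 \<in> marked X 2" "C31 \<in> marked X 2"
    and cp: "fc X 2 C10 1 False = fc X 2 C20 1 False" "fc X 2 C11 1 False = fc X 2 C20 1 True" "fc X 2 C10 2 False = fc X 2 C30 1 False" "fc X 2 C10 2 True = fc X 2 C31 1 False" "fc X 2 C11 2 False = fc X 2 C30 1 True" "fc X 2 C11 2 True = fc X 2 C31 1 True" "fc X 2 C20 2 False = fc X 2 C30 2 False" "fc X 2 C20 2 True = fc X 2 C31 2 False"
    and e: "fc X 2 C30 1 False \<in> marked X 1"
  shows "\<exists>t. t \<in> marked X 2 \<and> fc X 2 t 1 False = fc X 2 C10 1 True \<and> fc X 2 t 1 True = fc X 2 C11 1 True \<and> fc X 2 t 2 False = fc X 2 C30 2 True \<and> fc X 2 t 2 True = fc X 2 C31 2 True"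
proof -
  let ?c = "cf C10 C11 C20 C20 C30 C31"
  have "\<exists>u. u \<in> marked X 3 \<and> (\<forall>i d. 1 \<le> i \<longrightarrow> i \<le> 3 \<longrightarrow> (i, d) \<noteq> (2, True) \<longrightarrow> fc X 3 u i d = ?c i d)
     \<and> fc X 3 u 2 True \<in> marked X 2"
  proof (rule cube_gen[where X=X and k=2 and e=True and c="?c", OF com])
    show "?c i d \<in> marked X 2" if "1 \<le> i" "i \<le> 3" "(i, d) \<noteq> (2, True)" for i d
      using three[OF that(1,2)] that(3) mk by (cases d; elim disjE; simp add: cf_def)
    show "fc X 2 (?c i d) (j - 1) d' = fc X 2 (?c j d') i d"
      if "1 \<le> i" "i < j" "j \<le> 3" "(i, d) \<noteq> (2, True)" "(j, d') \<noteq> (2, True)" for i j d d'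
      using pairs3[OF that(1-3)] that(4,5) cp by (cases d; cases d'; elim disjE conjE; simp add: cf_def)
    show "fc X 2 (?c i d) j d' \<in> marked X 1"
      if "1 \<le> j" "j < i" "i \<le> 3" "(i, d) \<notin> bad_factors 2 True" "(j, d') \<notin> bad_factors 2 True" for i j d d'
      using pairs3[OF that(1-3)] that(4,5) e by (cases d; cases d'; elim disjE conjE; simp add: cf_def bad_factors_def)
  qed auto
  then obtain u where u: "u \<in> marked X 3" and uf: "\<And>i d. 1 \<le> i \<Longrightarrow> i \<le> 3 \<Longrightarrow> (i, d) \<noteq> (2, True) \<Longrightarrow> fc X 3 u i d = ?c i d"
    and t: "fc X 3 u 2 True \<in> marked X 2" by blast
  have mc: "marked_cset X" using com by (simp add: comical_def)
  have cs: "cubical_set X" using mc by (simp add: marked_cset_def)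
  have "marked X 3 \<subseteq> cells X 3" using mc by (simp add: marked_cset_def)
  then have uc: "u \<in> cells X (Suc (Suc 1))" using u by (auto simp: numeral_3_eq_3)
  have A: "fc X 2 (fc X 3 u 2 True) 1 d = fc X 2 (fc X 3 u 1 d) 1 True" for d
    using fc_fc[OF cs uc, of 1 2 d True] by (simp add: numeral_3_eq_3 numeral_2_eq_2)
  have B: "fc X 2 (fc X 3 u 2 True) 2 d = fc X 2 (fc X 3 u 3 d) 2 True" for d
    using fc_fc[OF cs uc, of 2 3 True d] by (simp add: numeral_3_eq_3 numeral_2_eq_2)
  show ?thesis using t A B uf[of 1 True] uf[of 1 False] uf[of 3 True] uf[of 3 False]
    by (intro exI[of _ "fc X 3 u 2 True"]) (simp add: cf_def)
qed


definition CA :: "('c, 'z) mcset_scheme \<Rightarrow> 'c \<Rightarrow> 'c \<Rightarrow> 'c \<Rightarrow> 'c \<Rightarrow> 'c \<Rightarrow> 'c \<Rightarrow> bool" where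
  "CA X x y z f g a \<longleftrightarrow> hom1 X x y f \<and> hom1 X y z g \<and> (\<exists>s. msq X s a g f (sig1 X z))"

context
  fixes X :: "('c, 'z) mcset_scheme"
  assumes com: "comical X"
begin

lemma mc: "marked_cset X" using com by (simp add: comical_def)
lemma cs: "cubical_set X" using mc by (simp add: marked_cset_def)
lemma mcell: "s \<in> marked X n \<Longrightarrow> s \<in> cells X n" using mc by (auto simp: marked_cset_def)

lemma sig1_marked: "z \<in> cells X 0 \<Longrightarrow> sig1 X z \<in> marked X 1"
proof -
  assume z: "z \<in> cells X 0"
  have "degenerate X 1 (sig1 X z)" unfolding degenerate_def sig1_def using z
    by (intro disjI1 exI[of _ 0] exI[of _ z] exI[of _ 1]) simp
  then show ?thesis using mc sig1_cell[OF cs z] by (auto simp: marked_cset_def)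
qed

definition ZZ :: "'c \<Rightarrow> 'c" where "ZZ z = sq1 X (sig1 X z)"

lemma ZZ_faces: "z \<in> cells X 0 \<Longrightarrow> fc X 2 (ZZ z) 1 d = sig1 X z" "z \<in> cells X 0 \<Longrightarrow> fc X 2 (ZZ z) 2 d = sig1 X z"
  unfolding ZZ_def using sq1_faces[OF cs sig1_cell[OF cs]] sig1_vtx[OF cs] by auto

lemma ZZ_marked: "z \<in> cells X 0 \<Longrightarrow> ZZ z \<in> marked X 2"
  unfolding ZZ_def using deg_marked[OF mc sig1_cell[OF cs]] by auto

lemma hom1_cells: "hom1 X x y f \<Longrightarrow> f \<in> cells X 1 \<and> x \<in> cells X 0 \<and> y \<in> cells X 0"
  unfolding hom1_def using fc1_cell[OF cs] by blast

lemmas F = sq1_faces[OF cs] sq2_faces[OF cs] gmx_faces[OF cs] sig1_vtx[OF cs] ZZ_faces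

lemma msq_cell: "msq X s a b c d \<Longrightarrow> s \<in> cells X 2"
  unfolding msq_def using mcell by blast

lemma msqD: "msq X s a b c d \<Longrightarrow> fc X 2 s 1 False = a \<and> fc X 2 s 1 True = b \<and> fc X 2 s 2 False = c \<and> fc X 2 s 2 True = d \<and> s \<in> marked X 2"
  by (simp add: msq_def)

lemma msqI: "s \<in> marked X 2 \<Longrightarrow> fc X 2 s 1 False = a \<Longrightarrow> fc X 2 s 1 True = b \<Longrightarrow> fc X 2 s 2 False = c \<Longrightarrow> fc X 2 s 2 True = d \<Longrightarrow> msq X s a b c d"
  by (simp add: msq_def)

lemma gmx_h: assumes "hom1 X x y f"
  shows "fc X 2 (gmx X f) 1 False = f" "fc X 2 (gmx X f) 2 False = f"
    "fc X 2 (gmx X f) 1 True = sig1 X y" "fc X 2 (gmx X f) 2 True = sig1 X y" "gmx X f \<in> marked X 2"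
  using gmx_faces[OF cs, of f] deg_marked[OF mc, of f] assms by (auto simp: hom1_def)

lemma sq1_h: assumes "hom1 X x y f"
  shows "fc X 2 (sq1 X f) 1 d = f" "fc X 2 (sq1 X f) 2 False = sig1 X x" "fc X 2 (sq1 X f) 2 True = sig1 X y"
    "sq1 X f \<in> marked X 2"
  using sq1_faces[OF cs, of f] deg_marked[OF mc, of f] assms by (auto simp: hom1_def)

lemma sq2_h: assumes "hom1 X x y f"
  shows "fc X 2 (sq2 X f) 2 d = f" "fc X 2 (sq2 X f) 1 False = sig1 X x" "fc X 2 (sq2 X f) 1 True = sig1 X y"
    "sq2 X f \<in> marked X 2"
  using sq2_faces[OF cs, of f] deg_marked[OF mc, of f] assms by (auto simp: hom1_def)

lemma CA_hom1: "CA X x y z f g a \<Longrightarrow> hom1 X x z a"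
proof -
  assume "CA X x y z f g a"
  then obtain s where h: "hom1 X x y f" "hom1 X y z g" "msq X s a g f (sig1 X z)" by (auto simp: CA_def)
  have sc: "s \<in> cells X 2" using msq_cell[OF h(3)] .
  have zc: "z \<in> cells X 0" using hom1_cells[OF h(2)] by simp
  have a: "fc X 2 s 1 False = a" "fc X 2 s 2 False = f" "fc X 2 s 2 True = sig1 X z" using h(3) by (auto simp: msq_def)
  have "fc X 1 a 1 False = fc X 1 f 1 False" using vtx[OF cs sc, of False False] a by simp
  moreover have "fc X 1 a 1 True = fc X 1 (sig1 X z) 1 False" using vtx[OF cs sc, of False True] a by simp
  moreover have "a \<in> cells X 1" using fc2_cell[OF cs sc, of 1 False] a by simp
  ultimately show ?thesis using h(1) sig1_vtx[OF cs zc] by (auto simp: hom1_def)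
qed

lemma CA_ex:
  assumes f: "hom1 X x y f" and g: "hom1 X y z g"
  shows "\<exists>a. CA X x y z f g a"
proof -
  have fc': "f \<in> cells X 1" and gc: "g \<in> cells X 1" and zc: "z \<in> cells X 0"
    using hom1_cells[OF f] hom1_cells[OF g] by auto
  let ?c = "\<lambda>(i::nat) d. if i = 1 then g else if d then sig1 X z else f"
  have "\<exists>u. u \<in> marked X 2 \<and> (\<forall>i d. 1 \<le> i \<longrightarrow> i \<le> 2 \<longrightarrow> (i, d) \<noteq> (1, False) \<longrightarrow> fc X 2 u i d = ?c i d)"
  proof (rule horn2[where X=X and k=1 and e=False and c="?c", OF com])
    show "?c i d \<in> cells X 1" if "1 \<le> i" "i \<le> 2" "(i, d) \<noteq> (1, False)" for i d
      using fc' gc sig1_cell[OF cs zc] by auto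
    show "fc X 1 (?c 1 d) 1 d' = fc X 1 (?c 2 d') 1 d" if "(1::nat, d) \<noteq> (1, False)" "(2::nat, d') \<noteq> (1, False)" for d d'
      using that f g sig1_vtx[OF cs zc] by (cases d'; auto simp: hom1_def)
    show "?c i d \<in> marked X 1" if "1 \<le> i" "i \<le> 2" "(i, d) \<notin> bad_factors 1 False" for i d
    proof -
      have "i = 2" "d" using that by (auto simp: bad_factors_def)
      then show ?thesis using sig1_marked[OF zc] by simp
    qed
  qed auto
  then obtain u where u: "u \<in> marked X 2" and uf: "\<And>i d. 1 \<le> i \<Longrightarrow> i \<le> 2 \<Longrightarrow> (i, d) \<noteq> (1, False) \<Longrightarrow> fc X 2 u i d = ?c i d"
    by blast
  have "msq X u (fc X 2 u 1 False) g f (sig1 X z)"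
    unfolding msq_def using u uf[of 1 True] uf[of 2 False] uf[of 2 True] by simp
  then show ?thesis unfolding CA_def using f g by blast
qed

lemma gmx_msq: "hom1 X x y f \<Longrightarrow> msq X (gmx X f) f (sig1 X y) f (sig1 X y)"
  using gmx_h[of x y f] by (intro msqI) auto

lemma sq1_msq: "hom1 X x y f \<Longrightarrow> msq X (sq1 X f) f f (sig1 X x) (sig1 X y)"
  using sq1_h[of x y f] by (intro msqI) auto

lemma sig1_hom1: "x \<in> cells X 0 \<Longrightarrow> hom1 X x x (sig1 X x)"
  unfolding hom1_def using sig1_cell[OF cs] sig1_vtx[OF cs] by simp

lemma L1:
  assumes h1: "CA X x y z f g a" and h2: "CA X x y z f g a'"
  shows "htpy X x z a a'"
proof -
  obtain s1 where s1: "msq X s1 a g f (sig1 X z)" and f: "hom1 X x y f" and g: "hom1 X y z g"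
    using h1 by (auto simp: CA_def)
  obtain s2 where s2: "msq X s2 a' g f (sig1 X z)" using h2 by (auto simp: CA_def)
  have zc: "z \<in> cells X 0" using hom1_cells[OF g] by simp
  note S = msqD[OF s1] msqD[OF s2] gmx_h[OF g] ZZ_faces[OF zc] ZZ_marked[OF zc] sig1_marked[OF zc]
  have "\<exists>t. t \<in> marked X 2 \<and> fc X 2 t 1 False = fc X 2 (s2) 1 False \<and> fc X 2 t 1 True = fc X 2 (ZZ z) 1 False \<and> fc X 2 t 2 False = fc X 2 (s1) 1 False \<and> fc X 2 t 2 True = fc X 2 (ZZ z) 1 False"
    by (rule cube10[of X "gmx X g" "s2" "ZZ z" "s1" "ZZ z", OF com]) (use S in simp_all)
  then obtain t where tt: "t \<in> marked X 2" "fc X 2 t 1 False = fc X 2 (s2) 1 False" "fc X 2 t 1 True = fc X 2 (ZZ z) 1 False" "fc X 2 t 2 False = fc X 2 (s1) 1 False" "fc X 2 t 2 True = fc X 2 (ZZ z) 1 False" by blast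
  have t: "msq X t a' (sig1 X z) a (sig1 X z)" by (rule msqI) (use tt S in simp_all)
  show ?thesis unfolding htpy_def using CA_hom1[OF h1] CA_hom1[OF h2] t by blast
qed

lemma L1p:
  assumes h1: "CA X x y z f g a" and h: "htpy X x z a a'"
  shows "CA X x y z f g a'"
proof -
  obtain s1 where s1: "msq X s1 a g f (sig1 X z)" and f: "hom1 X x y f" and g: "hom1 X y z g"
    using h1 by (auto simp: CA_def)
  obtain hh where hh: "msq X hh a' (sig1 X z) a (sig1 X z)" using h by (auto simp: htpy_def)
  have zc: "z \<in> cells X 0" using hom1_cells[OF g] by simp
  note S = msqD[OF s1] msqD[OF hh] gmx_h[OF g] ZZ_faces[OF zc] ZZ_marked[OF zc] sig1_marked[OF zc]
  have "\<exists>t. t \<in> marked X 2 \<and> fc X 2 t 1 False = fc X 2 (hh) 1 False \<and> fc X 2 t 1 True = fc X 2 (gmx X g) 1 False \<and> fc X 2 t 2 False = fc X 2 (s1) 2 False \<and> fc X 2 t 2 True = fc X 2 (ZZ z) 2 False"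
    by (rule cube20[of X "hh" "gmx X g" "ZZ z" "s1" "ZZ z", OF com]) (use S in simp_all)
  then obtain t where tt: "t \<in> marked X 2" "fc X 2 t 1 False = fc X 2 (hh) 1 False" "fc X 2 t 1 True = fc X 2 (gmx X g) 1 False" "fc X 2 t 2 False = fc X 2 (s1) 2 False" "fc X 2 t 2 True = fc X 2 (ZZ z) 2 False" by blast
  have t: "msq X t a' g f (sig1 X z)" by (rule msqI) (use tt S in simp_all)
  show ?thesis unfolding CA_def using f g t by blast
qed

lemma htpy_refl: "hom1 X x y f \<Longrightarrow> htpy X x y f f"
  unfolding htpy_def using gmx_msq by blast

lemma htpy_sym:
  assumes h: "htpy X x y f g" shows "htpy X x y g f"
proof -
  have f: "hom1 X x y f" and g: "hom1 X x y g" and yc: "y \<in> cells X 0" using h hom1_cells by (auto simp: htpy_def)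
  have "CA X x y y f (sig1 X y) g" using h sig1_hom1[OF yc] by (auto simp: htpy_def CA_def)
  moreover have "CA X x y y f (sig1 X y) f" unfolding CA_def using f sig1_hom1[OF yc] gmx_msq[OF f] by blast
  ultimately show ?thesis using L1 by blast
qed

lemma htpy_trans:
  assumes h1: "htpy X x y f g" and h2: "htpy X x y g h" shows "htpy X x y f h"
proof -
  have yc: "y \<in> cells X 0" using h1 hom1_cells by (auto simp: htpy_def)
  have "CA X x y y f (sig1 X y) g" using h1 sig1_hom1[OF yc] by (auto simp: htpy_def CA_def)
  then have "CA X x y y f (sig1 X y) h" using L1p h2 by blast
  then show ?thesis using h1 h2 by (auto simp: htpy_def CA_def)
qed

lemma conv_c:
  assumes f: "hom1 X x y f" and g: "hom1 X y z g" and s: "msq X s f (sig1 X z) c g"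
  shows "CA X x y z f g c"
proof -
  obtain a where ca: "CA X x y z f g a" using CA_ex[OF f g] by blast
  then obtain s1 where s1: "msq X s1 a g f (sig1 X z)" by (auto simp: CA_def)
  have zc: "z \<in> cells X 0" using hom1_cells[OF g] by simp
  have sc: "s \<in> cells X 2" using msq_cell[OF s] .
  note S = msqD[OF s1] msqD[OF s] gmx_h[OF g] ZZ_faces[OF zc] ZZ_marked[OF zc] sig1_marked[OF zc]
  have "\<exists>t. t \<in> marked X 2 \<and> fc X 2 t 1 False = fc X 2 (s1) 1 False \<and> fc X 2 t 1 True = fc X 2 (ZZ z) 1 False \<and> fc X 2 t 2 False = fc X 2 (s) 2 False \<and> fc X 2 t 2 True = fc X 2 (ZZ z) 2 False"
    by (rule cube20[of X "s1" "ZZ z" "gmx X g" "s" "ZZ z", OF com]) (use S in simp_all)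
  then obtain t where tt: "t \<in> marked X 2" "fc X 2 t 1 False = fc X 2 (s1) 1 False" "fc X 2 t 1 True = fc X 2 (ZZ z) 1 False" "fc X 2 t 2 False = fc X 2 (s) 2 False" "fc X 2 t 2 True = fc X 2 (ZZ z) 2 False" by blast
  have t: "msq X t a (sig1 X z) c (sig1 X z)" by (rule msqI) (use tt S in simp_all)
  have hc: "hom1 X x z c"
  proof -
    have "fc X 1 c 1 False = fc X 1 f 1 False" using vtx[OF cs sc, of False False] S by simp
    moreover have "fc X 1 c 1 True = fc X 1 (sig1 X z) 1 False" using vtx[OF cs sc, of True False] S by simp
    moreover have "c \<in> cells X 1" using fc2_cell[OF cs sc, of 2 False] S by simp
    ultimately show ?thesis using f sig1_vtx[OF cs zc] by (auto simp: hom1_def)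
  qed
  have "htpy X x z c a" unfolding htpy_def using hc CA_hom1[OF ca] t by blast
  then show ?thesis using L1p[OF ca htpy_sym] by blast
qed

lemma conv_b:
  assumes f: "hom1 X x y f" and g: "hom1 X y z g" and s: "msq X s f b (sig1 X x) g"
  shows "CA X x y z f g b"
proof -
  obtain a where ca: "CA X x y z f g a" using CA_ex[OF f g] by blast
  then obtain s1 where s1: "msq X s1 a g f (sig1 X z)" by (auto simp: CA_def)
  have ha: "hom1 X x z a" using CA_hom1[OF ca] .
  have zc: "z \<in> cells X 0" and xc: "x \<in> cells X 0" using hom1_cells[OF g] hom1_cells[OF f] by auto
  have sc: "s \<in> cells X 2" using msq_cell[OF s] .
  note S = msqD[OF s1] msqD[OF s] gmx_h[OF g] sq1_h[OF ha] ZZ_faces[OF zc] ZZ_marked[OF zc] sig1_marked[OF zc] sig1_marked[OF xc]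
  have "\<exists>t. t \<in> marked X 2 \<and> fc X 2 t 1 False = fc X 2 (sq1 X a) 1 True \<and> fc X 2 t 1 True = fc X 2 (gmx X g) 1 True \<and> fc X 2 t 2 False = fc X 2 (s) 1 True \<and> fc X 2 t 2 True = fc X 2 (ZZ z) 1 True"
    by (rule cube11[of X "s1" "sq1 X a" "gmx X g" "s" "ZZ z", OF com]) (use S in simp_all)
  then obtain t where tt: "t \<in> marked X 2" "fc X 2 t 1 False = fc X 2 (sq1 X a) 1 True" "fc X 2 t 1 True = fc X 2 (gmx X g) 1 True" "fc X 2 t 2 False = fc X 2 (s) 1 True" "fc X 2 t 2 True = fc X 2 (ZZ z) 1 True" by blast
  have t: "msq X t a (sig1 X z) b (sig1 X z)" by (rule msqI) (use tt S in simp_all)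
  have hb: "hom1 X x z b"
  proof -
    have "fc X 1 b 1 False = fc X 1 (sig1 X x) 1 True" using vtx[OF cs sc, of True False] S by simp
    moreover have "fc X 1 b 1 True = fc X 1 g 1 True" using vtx[OF cs sc, of True True] S by simp
    moreover have "b \<in> cells X 1" using fc2_cell[OF cs sc, of 1 True] S by simp
    ultimately show ?thesis using g sig1_vtx[OF cs xc] by (auto simp: hom1_def)
  qed
  have "htpy X x z b a" unfolding htpy_def using hb ha t by blast
  then show ?thesis using L1p[OF ca htpy_sym] by blast
qed

lemma conv_d:
  assumes f: "hom1 X x y f" and g: "hom1 X y z g" and s: "msq X s (sig1 X x) g f d"
  shows "CA X x y z f g d"
proof -
  obtain a where ca: "CA X x y z f g a" using CA_ex[OF f g] by blast
  then obtain s1 where s1: "msq X s1 a g f (sig1 X z)" by (auto simp: CA_def)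
  have ha: "hom1 X x z a" using CA_hom1[OF ca] .
  have zc: "z \<in> cells X 0" and xc: "x \<in> cells X 0" using hom1_cells[OF g] hom1_cells[OF f] by auto
  have sc: "s \<in> cells X 2" using msq_cell[OF s] .
  note S = msqD[OF s1] msqD[OF s] gmx_h[OF g] sq1_h[OF ha] ZZ_faces[OF zc] ZZ_marked[OF zc] sig1_marked[OF zc] sig1_marked[OF xc]
  have "\<exists>t. t \<in> marked X 2 \<and> fc X 2 t 1 False = fc X 2 (sq1 X a) 1 True \<and> fc X 2 t 1 True = fc X 2 (gmx X g) 1 True \<and> fc X 2 t 2 False = fc X 2 (s) 2 True \<and> fc X 2 t 2 True = fc X 2 (ZZ z) 2 True"
    by (rule cube21[of X "sq1 X a" "gmx X g" "s1" "s" "ZZ z", OF com]) (use S in simp_all)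
  then obtain t where tt: "t \<in> marked X 2" "fc X 2 t 1 False = fc X 2 (sq1 X a) 1 True" "fc X 2 t 1 True = fc X 2 (gmx X g) 1 True" "fc X 2 t 2 False = fc X 2 (s) 2 True" "fc X 2 t 2 True = fc X 2 (ZZ z) 2 True" by blast
  have t: "msq X t a (sig1 X z) d (sig1 X z)" by (rule msqI) (use tt S in simp_all)
  have hd: "hom1 X x z d"
  proof -
    have "fc X 1 d 1 False = fc X 1 (sig1 X x) 1 True" using vtx[OF cs sc, of False True] S by simp
    moreover have "fc X 1 d 1 True = fc X 1 g 1 True" using vtx[OF cs sc, of True True] S by simp
    moreover have "d \<in> cells X 1" using fc2_cell[OF cs sc, of 2 True] S by simp
    ultimately show ?thesis using g sig1_vtx[OF cs xc] by (auto simp: hom1_def)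
  qed
  have "htpy X x z d a" unfolding htpy_def using hd ha t by blast
  then show ?thesis using L1p[OF ca htpy_sym] by blast
qed

lemma comp_CA: "composite X x y z f g a \<Longrightarrow> CA X x y z f g a"
  unfolding composite_def using conv_b conv_c conv_d by (auto simp: CA_def)

lemma inv_f:
  assumes h: "htpy X x y f f'" and ca: "CA X x y z f g a"
  shows "CA X x y z f' g a"
proof -
  obtain s1 where s1: "msq X s1 a g f (sig1 X z)" and f: "hom1 X x y f" and g: "hom1 X y z g"
    using ca by (auto simp: CA_def)
  obtain hh where hh: "msq X hh f' (sig1 X y) f (sig1 X y)" and f': "hom1 X x y f'" using h by (auto simp: htpy_def)
  have zc: "z \<in> cells X 0" using hom1_cells[OF g] by simp
  note S = msqD[OF s1] msqD[OF hh] sq1_h[OF g] sq2_h[OF g] ZZ_faces[OF zc] ZZ_marked[OF zc] sig1_marked[OF zc]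
  have "\<exists>t. t \<in> marked X 2 \<and> fc X 2 t 1 False = fc X 2 (hh) 1 False \<and> fc X 2 t 1 True = fc X 2 (ZZ z) 1 False \<and> fc X 2 t 2 False = fc X 2 (s1) 1 False \<and> fc X 2 t 2 True = fc X 2 (sq1 X g) 1 False"
    by (rule cube10[of X "sq2 X g" "hh" "ZZ z" "s1" "sq1 X g", OF com]) (use S in simp_all)
  then obtain t where tt: "t \<in> marked X 2" "fc X 2 t 1 False = fc X 2 (hh) 1 False" "fc X 2 t 1 True = fc X 2 (ZZ z) 1 False" "fc X 2 t 2 False = fc X 2 (s1) 1 False" "fc X 2 t 2 True = fc X 2 (sq1 X g) 1 False" by blast
  have t: "msq X t f' (sig1 X z) a g" by (rule msqI) (use tt S in simp_all)
  show ?thesis by (rule conv_c[OF f' g t])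
qed

lemma inv_g:
  assumes h: "htpy X y z g g'" and ca: "CA X x y z f g a"
  shows "CA X x y z f g' a"
proof -
  obtain s1 where s1: "msq X s1 a g f (sig1 X z)" and f: "hom1 X x y f" and g: "hom1 X y z g"
    using ca by (auto simp: CA_def)
  obtain hh where hh: "msq X hh g' (sig1 X z) g (sig1 X z)" and g': "hom1 X y z g'" using h by (auto simp: htpy_def)
  have ha: "hom1 X x z a" using CA_hom1[OF ca] .
  have zc: "z \<in> cells X 0" using hom1_cells[OF g] by simp
  note S = msqD[OF s1] msqD[OF hh] gmx_h[OF ha] ZZ_faces[OF zc] ZZ_marked[OF zc] sig1_marked[OF zc]
  have "\<exists>t. t \<in> marked X 2 \<and> fc X 2 t 1 False = fc X 2 (gmx X a) 1 False \<and> fc X 2 t 1 True = fc X 2 (hh) 1 False \<and> fc X 2 t 2 False = fc X 2 (s1) 2 False \<and> fc X 2 t 2 True = fc X 2 (ZZ z) 2 False"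
    by (rule cube20[of X "gmx X a" "hh" "ZZ z" "s1" "ZZ z", OF com]) (use S in simp_all)
  then obtain t where tt: "t \<in> marked X 2" "fc X 2 t 1 False = fc X 2 (gmx X a) 1 False" "fc X 2 t 1 True = fc X 2 (hh) 1 False" "fc X 2 t 2 False = fc X 2 (s1) 2 False" "fc X 2 t 2 True = fc X 2 (ZZ z) 2 False" by blast
  have t: "msq X t a g' f (sig1 X z)" by (rule msqI) (use tt S in simp_all)
  show ?thesis unfolding CA_def using f g' t by blast
qed

lemma assoc:
  assumes ca: "CA X w x y f g a" and cb: "CA X w y z a h b" and cc: "CA X x y z g h c" and cd: "CA X w x z f c d"
  shows "htpy X w z b d"
proof -
  obtain sa where sa: "msq X sa a g f (sig1 X y)" using ca by (auto simp: CA_def)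
  obtain sc where sc: "msq X sc c h g (sig1 X z)" and h: "hom1 X y z h" using cc by (auto simp: CA_def)
  obtain sd where sd: "msq X sd d c f (sig1 X z)" using cd by (auto simp: CA_def)
  have zc: "z \<in> cells X 0" and yc: "y \<in> cells X 0" using hom1_cells[OF h] by auto
  note S = msqD[OF sa] msqD[OF sc] msqD[OF sd] sq1_h[OF h] ZZ_faces[OF zc] ZZ_marked[OF zc] sig1_marked[OF zc] sig1_marked[OF yc]
  have "\<exists>t. t \<in> marked X 2 \<and> fc X 2 t 1 False = fc X 2 (sd) 1 False \<and> fc X 2 t 1 True = fc X 2 (sq1 X h) 1 False \<and> fc X 2 t 2 False = fc X 2 (sa) 1 False \<and> fc X 2 t 2 True = fc X 2 (ZZ z) 1 False"
    by (rule cube10[of X "sc" "sd" "sq1 X h" "sa" "ZZ z", OF com]) (use S in simp_all)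
  then obtain t where tt: "t \<in> marked X 2" "fc X 2 t 1 False = fc X 2 (sd) 1 False" "fc X 2 t 1 True = fc X 2 (sq1 X h) 1 False" "fc X 2 t 2 False = fc X 2 (sa) 1 False" "fc X 2 t 2 True = fc X 2 (ZZ z) 1 False" by blast
  have t: "msq X t d h a (sig1 X z)" by (rule msqI) (use tt S in simp_all)
  have "CA X w y z a h d" unfolding CA_def using t cb by (auto simp: CA_def)
  then show ?thesis using L1[OF cb] by blast
qed

lemma unit_l: "composite X x x y (sig1 X x) f a \<Longrightarrow> htpy X x y a f"
proof -
  assume c: "composite X x x y (sig1 X x) f a"
  then have ca: "CA X x x y (sig1 X x) f a" by (rule comp_CA)
  then have f: "hom1 X x y f" and sx: "hom1 X x x (sig1 X x)" by (auto simp: CA_def)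
  have "CA X x x y (sig1 X x) f f" unfolding CA_def using f sx sq1_msq[OF f] by blast
  then show ?thesis using L1[OF ca] by blast
qed

lemma unit_r: "composite X x y y f (sig1 X y) a \<Longrightarrow> htpy X x y a f"
proof -
  assume c: "composite X x y y f (sig1 X y) a"
  then have ca: "CA X x y y f (sig1 X y) a" by (rule comp_CA)
  then have f: "hom1 X x y f" and sy: "hom1 X y y (sig1 X y)" by (auto simp: CA_def)
  have "CA X x y y f (sig1 X y) f" unfolding CA_def using f sy gmx_msq[OF f] by blast
  then show ?thesis using L1[OF ca] by blast
qed

end

theorem proposition4p7:
  fixes X :: "('c, 'z) mcset_scheme"
  assumes "comical X"
  shows
    "(\<forall>x y f. hom1 X x y f \<longrightarrow> htpy X x y f f) \<and>
     (\<forall>x y f g. htpy X x y f g \<longrightarrow> htpy X x y g f) \<and>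
     (\<forall>x y f g h. htpy X x y f g \<longrightarrow> htpy X x y g h \<longrightarrow> htpy X x y f h) \<and>
     (\<forall>x y z f g. hom1 X x y f \<longrightarrow> hom1 X y z g \<longrightarrow> (\<exists>a. composite X x y z f g a)) \<and>
     (\<forall>x y z f g a. composite X x y z f g a \<longrightarrow> hom1 X x z a) \<and>
     (\<forall>x y z f f' g g' a a'. htpy X x y f f' \<longrightarrow> htpy X y z g g' \<longrightarrow>
        composite X x y z f g a \<longrightarrow> composite X x y z f' g' a' \<longrightarrow> htpy X x z a a') \<and>
     (\<forall>x. x \<in> cells X 0 \<longrightarrow> hom1 X x x (sig1 X x)) \<and>
     (\<forall>x y f a. composite X x x y (sig1 X x) f a \<longrightarrow> htpy X x y a f) \<and>
     (\<forall>x y f a. composite X x y y f (sig1 X y) a \<longrightarrow> htpy X x y a f) \<and>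
     (\<forall>w x y z f g h a b c d. composite X w x y f g a \<longrightarrow> composite X w y z a h b \<longrightarrow>
        composite X x y z g h c \<longrightarrow> composite X w x z f c d \<longrightarrow> htpy X w z b d)"
proof (intro conjI allI impI)
  note com = assms
  show "htpy X x y f f" if "hom1 X x y f" for x y f using htpy_refl[OF com that] .
  show "htpy X x y g f" if "htpy X x y f g" for x y f g using htpy_sym[OF com that] .
  show "htpy X x y f h" if "htpy X x y f g" "htpy X x y g h" for x y f g h using htpy_trans[OF com that] .
  show "\<exists>a. composite X x y z f g a" if hf: "hom1 X x y f" and hg: "hom1 X y z g" for x y z f g
  proof -
    obtain a where "CA X x y z f g a" using CA_ex[OF com hf hg] by blast
    then show ?thesis unfolding CA_def composite_def by blast
  qed
  show "hom1 X x z a" if "composite X x y z f g a" for x y z f g a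
    using CA_hom1[OF com comp_CA[OF com that]] .
  show "htpy X x z a a'" if "htpy X x y f f'" "htpy X y z g g'" "composite X x y z f g a" "composite X x y z f' g' a'"
    for x y z f f' g g' a a'
  proof -
    have "CA X x y z f' g' a" using inv_g[OF com that(2) inv_f[OF com that(1) comp_CA[OF com that(3)]]] .
    then show ?thesis using L1[OF com _ comp_CA[OF com that(4)]] by blast
  qed
  show "hom1 X x x (sig1 X x)" if "x \<in> cells X 0" for x using sig1_hom1[OF com that] .
  show "htpy X x y a f" if "composite X x x y (sig1 X x) f a" for x y f a using unit_l[OF com that] .
  show "htpy X x y a f" if "composite X x y y f (sig1 X y) a" for x y f a using unit_r[OF com that] .
  show "htpy X w z b d" if "composite X w x y f g a" "composite X w y z a h b"
        "composite X x y z g h c" "composite X w x z f c d" for w x y z f g h a b c d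
    using assoc[OF com comp_CA[OF com that(1)] comp_CA[OF com that(2)] comp_CA[OF com that(3)] comp_CA[OF com that(4)]] .
qed


end
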